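(* Let $n\ge1$. The map $\phi:\mathcal{L}_{n-1}C_n\to\mathcal{A}_n$ is a bijection satisfying $\mathrm{cDes}(\phi\pi)=\mathrm{cDes}(\pi)$ and $(\phi\pi)^{-1}(n)=\pi^{-1}(n)$ for all $\pi\in\mathcal{L}_{n-1}C_n$. In particular, \[\sum_{\pi\in\mathcal{A}_n}\mathbf{x}^{\mathrm{cDes}(\pi)}t^{\pi^{-1}(n)}=\sum_{\pi\in\mathcal{L}_{n-1}C_n}\mathbf{x}^{\mathrm{cDes}(\pi)}t^{\pi^{-1}(n)}.\]
   Context: Permutations are in one-line notation, composed right to left; $c_n=(1,2,\dots,n)=23\cdots n1$, $C_n=\langle c_n\rangle$, and $AC_n=\{\sigma c:\sigma\in A,c\in C_n\}$. $\mathrm{Des}(\pi)=\{i\in[n-1]:\pi(i)>\pi(i+1)\}$, $\mathrm{cDes}(\pi)=\{i\in[n]:\pi(i)>\pi(i+1)\}$ with $\pi(n+1):=\pi(1)$; the descent set of any sequence of distinct integers is defined likewise; $\mathbf{x}^J=\prod_{i\in J}x_i$. A sequence $a_1,\dots,a_m$ of distinct integers is left-unimodal if it is the union of an increasing subsequence and a decreasing subsequence intersecting at $a_1$ (equivalently every prefix is an interval of integers when the values form an interval); it is right-unimodal if $a_m,\dots,a_1$ is left-unimodal. For any set $X$ of $m$ integers and $D\subseteq[m-1]$ there is a unique left-unimodal (resp. right-unimodal) arrangement of $X$ with descent set $D$. $\mathcal{L}_{n-1}$ is the set of left-unimodal permutations in $\mathfrak{S}_{n-1}$, viewed in $\mathfrak{S}_n$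 as fixing $n$. $\mathcal{A}_n$ is the set of $\pi\in\mathfrak{S}_n$ such that each $\{\pi(1),\dots,\pi(j)\}$ is an interval in $\mathbb{Z}_n$. The map $\phi$: given $\pi\in\mathcal{L}_{n-1}C_n$, let $j=\pi^{-1}(n)$. Set $(\phi\pi)(j)=n$. If $n\in\mathrm{cDes}(\pi)$, the set of the first $j-1$ entries of $\phi\pi$ is $[j-1]$; otherwise it is $[n-1]\setminus[n-j]$ (the remaining $n-j$ entries occupy positions $j+1,\dots,n$). The first $j-1$ entries are arranged as the unique left-unimodal sequence on their set with descent set $\mathrm{Des}(\pi)\cap[j-2]$, and the last $n-j$ entries as the unique right-unimodal sequence on their set with descent set $\{i-j: i\in\mathrm{Des}(\pi), i>j\}$. *)

theory Defs
  imports "HOL-Combinatorics.Permutations"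
begin

text \<open>Permutations of [n] = {1..n} are functions nat => nat permuting {1..n}
  (hence fixing everything outside {1..n}); one-line notation pi(1)...pi(n).
  Composition is function composition (right to left).\<close>

definition seq_des :: "nat list \<Rightarrow> nat set" where
  "seq_des xs = {i \<in> {1..<length xs}. xs ! (i - 1) > xs ! i}"

text \<open>Left-unimodal: union of an increasing and a decreasing subsequence meeting
  at the first entry, i.e. entries above the first entry appear increasingly and
  entries below it appear decreasingly.\<close>
definition left_unimodal :: "nat list \<Rightarrow> bool" where
  "left_unimodal xs \<longleftrightarrow> distinct xs \<and>
     sorted (filter (\<lambda>x. x > hd xs) xs) \<and>
     sorted (rev (filter (\<lambda>x. x < hd xs) xs))"

definition right_unimodal :: "nat list \<Rightarrow> bool" where
  "right_unimodal xs \<longleftrightarrow> left_unimodal (rev xs)"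

text \<open>The unique left-/right-unimodal arrangement of a finite set with given descent set.\<close>
definition lu_arr :: "nat set \<Rightarrow> nat set \<Rightarrow> nat list" where
  "lu_arr X D = (THE xs. set xs = X \<and> distinct xs \<and> left_unimodal xs \<and> seq_des xs = D)"

definition ru_arr :: "nat set \<Rightarrow> nat set \<Rightarrow> nat list" where
  "ru_arr X D = (THE xs. set xs = X \<and> distinct xs \<and> right_unimodal xs \<and> seq_des xs = D)"

definition Des :: "nat \<Rightarrow> (nat \<Rightarrow> nat) \<Rightarrow> nat set" where
  "Des n p = {i \<in> {1..<n}. p i > p (i + 1)}"

definition cDes :: "nat \<Rightarrow> (nat \<Rightarrow> nat) \<Rightarrow> nat set" where
  "cDes n p = {i \<in> {1..n}. p i > p (if i = n then 1 else i + 1)}"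

definition cyc :: "nat \<Rightarrow> nat \<Rightarrow> nat" where
  "cyc n i = (if 1 \<le> i \<and> i < n then i + 1 else if i = n then 1 else i)"

text \<open>L_{n-1}: left-unimodal permutations of [n-1], viewed in S_n fixing n.\<close>
definition Lset :: "nat \<Rightarrow> (nat \<Rightarrow> nat) set" where
  "Lset n = {s. s permutes {1..n-1} \<and> left_unimodal (map s [1..<n])}"

definition LC :: "nat \<Rightarrow> (nat \<Rightarrow> nat) set" where
  "LC n = {s \<circ> (cyc n ^^ k) | s k. s \<in> Lset n}"

text \<open>Intervals of Z_n, identifying Z_n with {1..n}.\<close>
definition cyc_interval :: "nat \<Rightarrow> nat set \<Rightarrow> bool" where
  "cyc_interval n S \<longleftrightarrow> (\<exists>a m. S = {(a + i) mod n + 1 | i. i < m})"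

definition Aset :: "nat \<Rightarrow> (nat \<Rightarrow> nat) set" where
  "Aset n = {p. p permutes {1..n} \<and> (\<forall>j\<in>{1..n}. cyc_interval n (p ` {1..j}))}"

definition phi :: "nat \<Rightarrow> (nat \<Rightarrow> nat) \<Rightarrow> (nat \<Rightarrow> nat)" where
  "phi n p =
    (let j = inv p n;
         S1 = (if n \<in> cDes n p then {1..j-1} else {1..n-1} - {1..n-j});
         S2 = {1..n-1} - S1;
         L = lu_arr S1 (Des n p \<inter> {1..j-2});
         R = ru_arr S2 {i - j | i. i \<in> Des n p \<and> i > j};
         w = L @ [n] @ R
     in (\<lambda>i. if i \<in> {1..n} then w ! (i - 1) else i))"

end

theory Submission
  imports Defs
begin

lemma seq_des_sub: "seq_des xs \<subseteq> {1..<length xs}"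
  by (auto simp: seq_des_def)

lemma seq_des_append:
  "seq_des (X @ Y) = seq_des X \<union> (\<lambda>i. i + length X) ` seq_des Y \<union>
     (if X \<noteq> [] \<and> Y \<noteq> [] \<and> last X > hd Y then {length X} else {})"
proof (rule set_eqI)
  fix i
  show "i \<in> seq_des (X @ Y) \<longleftrightarrow> i \<in> seq_des X \<union> (\<lambda>i. i + length X) ` seq_des Y \<union>
     (if X \<noteq> [] \<and> Y \<noteq> [] \<and> last X > hd Y then {length X} else {})"
  proof (cases "i < length X")
    case True
    then show ?thesis by (auto simp: seq_des_def nth_append)
  next
    case False
    show ?thesis
    proof (cases "i = length X")
      case True
      then show ?thesis using False
        by (cases X; cases Y) (auto simp: seq_des_def nth_append last_conv_nth hd_conv_nth)
    next
      case False2: False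
      have "i \<in> seq_des (X @ Y) \<longleftrightarrow> i - length X \<in> seq_des Y"
        using False False2 by (auto simp: seq_des_def nth_append)
      moreover have "i \<in> (\<lambda>i. i + length X) ` seq_des Y \<longleftrightarrow> i - length X \<in> seq_des Y"
        using False False2 by (auto simp: image_iff intro: bexI[where x="i - length X"])
      moreover have "i \<notin> seq_des X" using False seq_des_sub by fastforce
      ultimately show ?thesis using False2 by auto
    qed
  qed
qed

lemma seq_des_single: "seq_des [x] = {}" by (simp add: seq_des_def)

lemma seq_des_snoc: "seq_des (X @ [x]) = seq_des X \<union> (if X \<noteq> [] \<and> last X > x then {length X} else {})"
  by (simp only: seq_des_append seq_des_single) auto

lemma seq_des_Cons: "seq_des (x # Y) = (if Y \<noteq> [] \<and> x > hd Y then {1} else {}) \<union> Suc ` seq_des Y"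
  using seq_des_append[of "[x]" Y] by (auto simp: seq_des_def)

lemma lu_Nil: "left_unimodal []" by (simp add: left_unimodal_def)

lemma lu_distinct: "left_unimodal xs \<Longrightarrow> distinct xs" by (simp add: left_unimodal_def)

lemma lu_snoc: "left_unimodal (xs @ [x]) \<longleftrightarrow> left_unimodal xs \<and> x \<notin> set xs \<and>
   ((\<forall>y\<in>set xs. y < x) \<or> (\<forall>y\<in>set xs. x < y))"
proof (cases xs)
  case Nil
  then show ?thesis by (simp add: left_unimodal_def)
next
  case (Cons h t)
  show ?thesis
  proof (cases "x < h")
    case True
    then show ?thesis using Cons
      by (auto simp: left_unimodal_def sorted_append sorted_wrt_append not_less le_less) (metis linorder_neqE_nat less_trans)+
  next
    case False
    then show ?thesis using Cons
      by (auto simp: left_unimodal_def sorted_append sorted_wrt_append not_less le_less) (metis linorder_neqE_nat less_trans)+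
  qed
qed


lemma lu_unique:
  "left_unimodal xs \<Longrightarrow> left_unimodal ys \<Longrightarrow> set xs = set ys \<Longrightarrow> seq_des xs = seq_des ys \<Longrightarrow> xs = ys"
proof (induction xs arbitrary: ys rule: rev_induct)
  case Nil
  then show ?case by simp
next
  case (snoc x xs)
  have dx: "distinct (xs @ [x])" using snoc.prems(1) lu_distinct by blast
  have dy: "distinct ys" using snoc.prems(2) lu_distinct by blast
  have len: "length ys = length (xs @ [x])"
    using distinct_card[OF dx] distinct_card[OF dy] snoc.prems(3) by simp
  then obtain ys' y where ys: "ys = ys' @ [y]" by (cases ys rule: rev_cases) auto
  have lx: "left_unimodal xs" "x \<notin> set xs" "(\<forall>z\<in>set xs. z < x) \<or> (\<forall>z\<in>set xs. x < z)"
    using snoc.prems(1) lu_snoc by auto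
  have ly: "left_unimodal ys'" "y \<notin> set ys'" "(\<forall>z\<in>set ys'. z < y) \<or> (\<forall>z\<in>set ys'. y < z)"
    using snoc.prems(2) lu_snoc ys by auto
  have lens: "length ys' = length xs" using len ys by simp
  have "x = y"
  proof (cases "xs = []")
    case True
    then show ?thesis using lens ys snoc.prems(3) by simp
  next
    case False
    then have ne: "ys' \<noteq> []" using lens by auto
    have dxs: "length xs \<in> seq_des (xs @ [x]) \<longleftrightarrow> last xs > x"
      using False seq_des_snoc[of xs x] seq_des_sub[of xs] by auto
    have dys: "length xs \<in> seq_des (ys' @ [y]) \<longleftrightarrow> last ys' > y"
      using ne lens seq_des_snoc[of ys' y] seq_des_sub[of ys'] by auto
    have minx: "last xs > x \<longleftrightarrow> (\<forall>z\<in>set xs. x < z)"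
    proof
      assume "last xs > x" then show "\<forall>z\<in>set xs. x < z" using lx(3) last_in_set[OF False] by fastforce
    next
      assume "\<forall>z\<in>set xs. x < z" then show "last xs > x" using last_in_set[OF False] by blast
    qed
    have miny: "last ys' > y \<longleftrightarrow> (\<forall>z\<in>set ys'. y < z)"
    proof
      assume "last ys' > y" then show "\<forall>z\<in>set ys'. y < z" using ly(3) last_in_set[OF ne] by fastforce
    next
      assume "\<forall>z\<in>set ys'. y < z" then show "last ys' > y" using last_in_set[OF ne] by blast
    qed
    have eq: "(\<forall>z\<in>set xs. x < z) \<longleftrightarrow> (\<forall>z\<in>set ys'. y < z)"
      using dxs dys minx miny snoc.prems(4) ys by simp
    have S: "insert x (set xs) = insert y (set ys')" using snoc.prems(3) ys by simp
    show ?thesis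
    proof (rule ccontr)
      assume ne2: "x \<noteq> y"
      then have xin: "x \<in> set ys'" and yin: "y \<in> set xs" using S by auto
      show False
      proof (cases "\<forall>z\<in>set xs. x < z")
        case True
        then show ?thesis using eq xin yin by fastforce
      next
        case False
        then have "\<forall>z\<in>set xs. z < x" "\<forall>z\<in>set ys'. z < y" using lx(3) ly(3) eq \<open>xs \<noteq> []\<close> by auto
        then show ?thesis using xin yin by fastforce
      qed
    qed
  qed
  then have "set xs = set ys'" using snoc.prems(3) ys lx(2) ly(2) by auto
  moreover have "seq_des xs = seq_des ys'"
  proof -
    have "seq_des xs = seq_des (xs @ [x]) - {length xs}"
      using seq_des_snoc[of xs x] seq_des_sub[of xs] by auto
    also have "\<dots> = seq_des (ys' @ [y]) - {length ys'}" using snoc.prems(4) ys lens by simp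
    also have "\<dots> = seq_des ys'"
      using seq_des_snoc[of ys' y] seq_des_sub[of ys'] by auto
    finally show ?thesis .
  qed
  ultimately have "xs = ys'" using snoc.IH lx(1) ly(1) by blast
  then show ?case using ys \<open>x = y\<close> by simp
qed

lemma lu_exists:
  "finite X \<Longrightarrow> D \<subseteq> {1..<card X} \<Longrightarrow>
   \<exists>xs. set xs = X \<and> distinct xs \<and> left_unimodal xs \<and> seq_des xs = D"
proof (induction "card X" arbitrary: X D)
  case 0
  then show ?case by (intro exI[of _ "[]"]) (auto simp: lu_Nil seq_des_def)
next
  case (Suc k)
  have ne: "X \<noteq> {}" using Suc.hyps(2) by auto
  show ?case
  proof (cases "k = 0")
    case True
    from Suc.hyps(2) True have "card X = 1" by simp
    then obtain a where "X = {a}" by (rule card_1_singletonE)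
    then show ?thesis using Suc.prems True Suc.hyps(2)
      by (intro exI[of _ "[a]"]) (auto simp: left_unimodal_def seq_des_def)
  next
    case False
    define x where "x = (if k \<in> D then Min X else Max X)"
    have xX: "x \<in> X" using ne Suc.prems(1) by (simp add: x_def)
    have cX: "card X = Suc k" using Suc.hyps(2) by simp
    have cX': "card (X - {x}) = k" using card_Diff_singleton[OF xX] cX by simp
    have fin': "finite (X - {x})" using Suc.prems(1) by simp
    have D': "D - {k} \<subseteq> {1..<card (X - {x})}" using Suc.prems(2) cX cX' by auto
    from Suc.hyps(1)[OF cX'[symmetric] fin' D']
    obtain xs where xs: "set xs = X - {x}" "distinct xs" "left_unimodal xs" "seq_des xs = D - {k}"
      by blast
    have xsne: "xs \<noteq> []"
    proof
      assume "xs = []"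
      then have "X - {x} = {}" using xs(1) by simp
      then have "k = 0" using cX' by (metis card.empty)
      with False show False by simp
    qed
    have lin: "last xs \<in> X - {x}" using last_in_set[OF xsne] xs(1) by simp
    have e1: "x < y" if "k \<in> D" "y \<in> set xs" for y
    proof -
      have yX: "y \<in> X" "y \<noteq> x" using xs(1) that(2) by auto
      show ?thesis using Min_le[OF Suc.prems(1) yX(1)] yX(2) by (simp add: x_def that(1))
    qed
    have e2: "y < x" if "k \<notin> D" "y \<in> set xs" for y
    proof -
      have yX: "y \<in> X" "y \<noteq> x" using xs(1) that(2) by auto
      show ?thesis using Max_ge[OF Suc.prems(1) yX(1)] yX(2) by (simp add: x_def that(1))
    qed
    have ext: "(k \<in> D \<longrightarrow> (\<forall>y\<in>set xs. x < y)) \<and> (k \<notin> D \<longrightarrow> (\<forall>y\<in>set xs. y < x))"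
      using e1 e2 by blast
    have xn: "x \<notin> set xs" using xs(1) by simp
    have lu: "left_unimodal (xs @ [x])"
      unfolding lu_snoc using xs(3) xn ext by blast
    have "seq_des (xs @ [x]) = D"
    proof -
      have lenxs: "length xs = k" using distinct_card[OF xs(2)] xs(1) cX' by simp
      have "last xs > x \<longleftrightarrow> k \<in> D"
      proof
        assume "last xs > x" then show "k \<in> D" using ext last_in_set[OF xsne] by force
      next
        assume "k \<in> D" then show "last xs > x" using ext last_in_set[OF xsne] by blast
      qed
      then show ?thesis using seq_des_snoc[of xs x] xs(4) xsne lenxs by auto
    qed
    then show ?thesis using xs lu xX by (intro exI[of _ "xs @ [x]"]) auto
  qed
qed

lemma lu_arr_props:
  assumes "finite X" "D \<subseteq> {1..<card X}"
  shows "set (lu_arr X D) = X \<and> distinct (lu_arr X D) \<and> left_unimodal (lu_arr X D) \<and> seq_des (lu_arr X D) = D"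
proof -
  obtain xs where xs: "set xs = X" "distinct xs" "left_unimodal xs" "seq_des xs = D"
    using lu_exists[OF assms] by blast
  have "\<exists>!xs. set xs = X \<and> distinct xs \<and> left_unimodal xs \<and> seq_des xs = D"
  proof (rule ex1I[of _ xs])
    show "set xs = X \<and> distinct xs \<and> left_unimodal xs \<and> seq_des xs = D" using xs by simp
  next
    fix ys assume "set ys = X \<and> distinct ys \<and> left_unimodal ys \<and> seq_des ys = D"
    then show "ys = xs" using lu_unique[of ys xs] xs by simp
  qed
  then show ?thesis unfolding lu_arr_def by (rule theI')
qed

lemma lu_arr_eq:
  assumes "set xs = X" "left_unimodal xs" "seq_des xs = D"
  shows "lu_arr X D = xs"
  unfolding lu_arr_def
proof (rule the_equality)
  show "set xs = X \<and> distinct xs \<and> left_unimodal xs \<and> seq_des xs = D" using assms lu_distinct by simp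
next
  fix ys assume "set ys = X \<and> distinct ys \<and> left_unimodal ys \<and> seq_des ys = D"
  then show "ys = xs" using lu_unique[of ys xs] assms by simp
qed


lemma seq_des_rev:
  assumes "distinct xs"
  shows "seq_des (rev xs) = {i \<in> {1..<length xs}. length xs - i \<notin> seq_des xs}"
proof (rule set_eqI)
  fix i
  show "i \<in> seq_des (rev xs) \<longleftrightarrow> i \<in> {i \<in> {1..<length xs}. length xs - i \<notin> seq_des xs}"
  proof (cases "i \<in> {1..<length xs}")
    case True
    let ?m = "length xs"
    have a0: "rev xs ! (i - 1) = xs ! (?m - Suc (i - 1))" using True by (intro rev_nth) auto
    have a: "rev xs ! (i - 1) = xs ! (?m - i)" using a0 True by simp
    have b: "rev xs ! i = xs ! (?m - i - 1)" using True by (simp add: rev_nth)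
    have ne: "xs ! (?m - i) \<noteq> xs ! (?m - i - 1)"
    proof
      assume "xs ! (?m - i) = xs ! (?m - i - 1)"
      moreover have "?m - i < ?m" "?m - i - 1 < ?m" using True by auto
      ultimately have "?m - i = ?m - i - 1" using assms nth_eq_iff_index_eq[of xs "?m - i" "?m - i - 1"] by blast
      moreover have "i < ?m" using True by simp
      ultimately show False by linarith
    qed
    have c: "?m - i \<in> seq_des xs \<longleftrightarrow> xs ! (?m - i - 1) > xs ! (?m - i)"
      using True by (auto simp: seq_des_def)
    have "i \<in> seq_des (rev xs) \<longleftrightarrow> xs ! (?m - i) > xs ! (?m - i - 1)"
      using True a b by (simp add: seq_des_def)
    then show ?thesis using c ne True by auto
  next
    case False
    then show ?thesis by (auto simp: seq_des_def)
  qed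
qed

lemma ru_distinct: "right_unimodal xs \<Longrightarrow> distinct xs"
  by (simp add: right_unimodal_def lu_distinct[of "rev xs", simplified])

lemma ru_unique:
  assumes "right_unimodal xs" "right_unimodal ys" "set xs = set ys" "seq_des xs = seq_des ys"
  shows "xs = ys"
proof -
  have d: "distinct xs" "distinct ys" using assms ru_distinct by auto
  have l: "length xs = length ys" using distinct_card[OF d(1)] distinct_card[OF d(2)] assms(3) by simp
  have "rev xs = rev ys"
    apply (rule lu_unique)
    using assms d l by (auto simp: right_unimodal_def seq_des_rev)
  then show ?thesis by simp
qed

lemma ru_exists:
  assumes "finite X" "D \<subseteq> {1..<card X}"
  shows "\<exists>xs. set xs = X \<and> distinct xs \<and> right_unimodal xs \<and> seq_des xs = D"
proof -
  define D' where "D' = {i \<in> {1..<card X}. card X - i \<notin> D}"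
  have "D' \<subseteq> {1..<card X}" by (auto simp: D'_def)
  then obtain xs where xs: "set xs = X" "distinct xs" "left_unimodal xs" "seq_des xs = D'"
    using lu_exists[OF assms(1)] by blast
  have len: "length xs = card X" using distinct_card[OF xs(2)] xs(1) by simp
  have "seq_des (rev xs) = D"
  proof -
    have "seq_des (rev xs) = {i \<in> {1..<card X}. card X - i \<notin> D'}"
      using seq_des_rev[OF xs(2)] xs(4) len by simp
    also have "\<dots> = D"
    proof (rule set_eqI)
      fix i
      show "i \<in> {i \<in> {1..<card X}. card X - i \<notin> D'} \<longleftrightarrow> i \<in> D"
        using assms(2) by (cases "i \<in> {1..<card X}") (auto simp: D'_def)
    qed
    finally show ?thesis .
  qed
  then show ?thesis using xs by (intro exI[of _ "rev xs"]) (simp add: right_unimodal_def)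
qed

lemma ru_arr_props:
  assumes "finite X" "D \<subseteq> {1..<card X}"
  shows "set (ru_arr X D) = X \<and> distinct (ru_arr X D) \<and> right_unimodal (ru_arr X D) \<and> seq_des (ru_arr X D) = D"
proof -
  obtain xs where xs: "set xs = X" "distinct xs" "right_unimodal xs" "seq_des xs = D"
    using ru_exists[OF assms] by blast
  have "\<exists>!xs. set xs = X \<and> distinct xs \<and> right_unimodal xs \<and> seq_des xs = D"
  proof (rule ex1I[of _ xs])
    show "set xs = X \<and> distinct xs \<and> right_unimodal xs \<and> seq_des xs = D" using xs by simp
  next
    fix ys assume "set ys = X \<and> distinct ys \<and> right_unimodal ys \<and> seq_des ys = D"
    then show "ys = xs" using ru_unique[of ys xs] xs by simp
  qed
  then show ?thesis unfolding ru_arr_def by (rule theI')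
qed

lemma ru_arr_eq:
  assumes "set xs = X" "right_unimodal xs" "seq_des xs = D"
  shows "ru_arr X D = xs"
  unfolding ru_arr_def
proof (rule the_equality)
  show "set xs = X \<and> distinct xs \<and> right_unimodal xs \<and> seq_des xs = D" using assms ru_distinct by simp
next
  fix ys assume "set ys = X \<and> distinct ys \<and> right_unimodal ys \<and> seq_des ys = D"
  then show "ys = xs" using ru_unique[of ys xs] assms by simp
qed


lemma lu_prefix_interval:
  "left_unimodal xs \<Longrightarrow> set xs = {a..b} \<Longrightarrow> \<exists>a' b'. set (take k xs) = {a'..(b'::nat)}"
proof (induction xs arbitrary: a b k rule: rev_induct)
  case Nil
  then show ?case by (intro exI[of _ 1] exI[of _ 0]) simp
next
  case (snoc x xs)
  have lx: "left_unimodal xs" "x \<notin> set xs" "(\<forall>z\<in>set xs. z < x) \<or> (\<forall>z\<in>set xs. x < z)"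
    using snoc.prems(1) lu_snoc by auto
  have S: "set xs = {a..b} - {x}" using snoc.prems(2) lx(2) by auto
  have xin: "x \<in> {a..b}" using snoc.prems(2) by auto
  have "\<exists>c d. set xs = {c..(d::nat)}"
  proof (cases "xs = []")
    case True
    then show ?thesis by (intro exI[of _ 1] exI[of _ 0]) simp
  next
    case False
    show ?thesis
    proof (cases "\<forall>z\<in>set xs. z < x")
      case True
      have xb: "x = b"
      proof (rule ccontr)
        assume "x \<noteq> b"
        then have "b \<in> set xs" using S xin by auto
        then have "b < x" using True by blast
        then show False using xin by simp
      qed
      have "hd xs < x" using True \<open>xs \<noteq> []\<close> by simp
      then have b1: "b \<ge> 1" using xb by simp
      have "{a..b} - {x} = {a..b-1}" using xb b1 by auto
      then have "set xs = {a..b-1}" using S by simp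
      then show ?thesis by blast
    next
      case False
      then have F: "\<forall>z\<in>set xs. x < z" using lx(3) by blast
      have xa: "x = a"
      proof (rule ccontr)
        assume "x \<noteq> a"
        then have "a \<in> set xs" using S xin by auto
        then have "x < a" using F by blast
        then show False using xin by simp
      qed
      have "{a..b} - {x} = {a+1..b}" using xa by auto
      then have "set xs = {a+1..b}" using S by simp
      then show ?thesis by blast
    qed
  qed
  then obtain c d where cd: "set xs = {c..d}" by blast
  show ?case
  proof (cases "k \<le> length xs")
    case True
    then show ?thesis using snoc.IH[OF lx(1) cd, of k] by simp
  next
    case False
    then have "take k (xs @ [x]) = xs @ [x]" by simp
    then show ?thesis using snoc.prems(2) by (intro exI[of _ a] exI[of _ b]) simp
  qed
qed

lemma interval_prefix_lu:
  "distinct xs \<Longrightarrow> (\<forall>k. \<exists>a b. set (take k xs) = {a..(b::nat)}) \<Longrightarrow> left_unimodal xs"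
proof (induction xs rule: rev_induct)
  case Nil
  then show ?case by (simp add: lu_Nil)
next
  case (snoc x xs)
  have pre: "\<forall>k. \<exists>a b. set (take k xs) = {a..(b::nat)}"
  proof
    fix k
    have "take k xs = take (min k (length xs)) (xs @ [x])" by (cases "k \<le> length xs") (auto simp: min_def)
    moreover obtain a b where "set (take (min k (length xs)) (xs @ [x])) = {a..(b::nat)}"
      using snoc.prems(2) by blast
    ultimately show "\<exists>a b. set (take k xs) = {a..(b::nat)}" by auto
  qed
  have lxs: "left_unimodal xs" using snoc.IH pre snoc.prems(1) by simp
  obtain a b where ab: "set xs = {a..b}" using pre[rule_format, of "length xs"] by auto
  have xn: "x \<notin> set xs" using snoc.prems(1) by simp
  have "(\<forall>z\<in>set xs. z < x) \<or> (\<forall>z\<in>set xs. x < z)"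
  proof (cases "x < a")
    case True
    then show ?thesis using ab by auto
  next
    case False
    then have "x > b \<or> xs = []" using xn ab by auto
    then show ?thesis using ab by auto
  qed
  then show ?case using lu_snoc lxs xn by blast
qed

lemma cyc_interval_alt: "cyc_interval n S \<longleftrightarrow> (\<exists>a m. S = (\<lambda>i. (a + i) mod n + 1) ` {..<m})"
proof -
  have "\<And>a m. {(a + i) mod n + 1 | i. i < m} = (\<lambda>i. (a + i) mod n + 1) ` {..<m}" by auto
  then show ?thesis unfolding cyc_interval_def by simp
qed

lemma mod_2n: "n \<le> (x::nat) \<Longrightarrow> x < 2 * n \<Longrightarrow> x mod n = x - n"
  by (simp add: le_mod_geq)

lemma cyc_ord:
  assumes "{a..b} \<subseteq> {1..n}"
  shows "cyc_interval n {a..b}"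
proof (cases "a \<le> b")
  case False
  then show ?thesis unfolding cyc_interval_alt by (intro exI[of _ 0] exI[of _ 0]) simp
next
  case True
  then have ab: "1 \<le> a" "b \<le> n" using assms by auto
  have "{a..b} = (\<lambda>i. (a - 1 + i) mod n + 1) ` {..<b - a + 1}"
  proof (rule set_eqI, rule iffI)
    fix y assume y: "y \<in> {a..b}"
    have e: "a - 1 + (y - a) = y - 1" "y - 1 < n" using y ab by auto
    have "(a - 1 + (y - a)) mod n + 1 = y" unfolding e(1) using e(2) y ab by simp
    moreover have "y - a \<in> {..<b - a + 1}" using y by auto
    ultimately show "y \<in> (\<lambda>i. (a - 1 + i) mod n + 1) ` {..<b - a + 1}" by (rule image_eqI[OF sym])
  next
    fix y assume "y \<in> (\<lambda>i. (a - 1 + i) mod n + 1) ` {..<b - a + 1}"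
    then obtain i where i: "i < b - a + 1" "y = (a - 1 + i) mod n + 1" by auto
    have "a - 1 + i < n" using i(1) ab True by linarith
    then have "y = a + i" using i(2) ab by simp
    then show "y \<in> {a..b}" using i(1) True by simp
  qed
  then show ?thesis unfolding cyc_interval_alt by blast
qed

lemma cyc_full: "cyc_interval n {1..n}"
proof -
  have "{1..n} = (\<lambda>i. (0 + i) mod n + 1) ` {..<n}"
  proof (rule set_eqI, rule iffI)
    fix y assume y: "y \<in> {1..n}"
    then have "y - 1 < n" by auto
    then have "(0 + (y - 1)) mod n + 1 = y" using y by simp
    moreover have "y - 1 \<in> {..<n}" using y by auto
    ultimately show "y \<in> (\<lambda>i. (0 + i) mod n + 1) ` {..<n}" by (rule image_eqI[OF sym])
  next
    fix y assume "y \<in> (\<lambda>i. (0 + i) mod n + 1) ` {..<n}"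
    then obtain i where "i < n" "y = (0 + i) mod n + 1" by blast
    then show "y \<in> {1..n}" by simp
  qed
  then show ?thesis unfolding cyc_interval_alt by blast
qed

lemma cyc_compl:
  assumes "n \<ge> 1"
  shows "cyc_interval n ({1..n} - {a..b})"
proof (cases "{a..b} \<inter> {1..n} = {}")
  case True
  then have "{1..n} - {a..b} = {1..n}" by auto
  then show ?thesis using cyc_full by simp
next
  case False
  define a1 where "a1 = max a 1"
  define b1 where "b1 = min b n"
  have a1b1: "1 \<le> a1" "a1 \<le> b1" "b1 \<le> n" using False by (auto simp: a1_def b1_def)
  have T: "{1..n} - {a..b} = {y. 1 \<le> y \<and> y \<le> n \<and> (y < a1 \<or> b1 < y)}"
    by (auto simp: a1_def b1_def)
  define m where "m = n + a1 - b1 - 1"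
  have "{y. 1 \<le> y \<and> y \<le> n \<and> (y < a1 \<or> b1 < y)} = (\<lambda>i. (b1 + i) mod n + 1) ` {..<m}"
  proof (rule set_eqI, rule iffI)
    fix y assume y: "y \<in> {y. 1 \<le> y \<and> y \<le> n \<and> (y < a1 \<or> b1 < y)}"
    show "y \<in> (\<lambda>i. (b1 + i) mod n + 1) ` {..<m}"
    proof (cases "b1 < y")
      case True
      have "(b1 + (y - b1 - 1)) mod n + 1 = y" using True y by simp
      moreover have "y - b1 - 1 \<in> {..<m}" using True y a1b1 by (auto simp: m_def)
      ultimately show ?thesis by (rule image_eqI[OF sym])
    next
      case False
      then have ya: "y < a1" using y by auto
      have "(b1 + (n - b1 + y - 1)) mod n = y - 1"
      proof -
        have A: "b1 + (n - b1 + y - 1) = n + (y - 1)" using y a1b1 by simp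
        have B: "(n + (y - 1)) mod n = y - 1"
        proof -
          have lt: "y - 1 < n" using y ya a1b1 by linarith
          have "(n + (y - 1)) mod n = (y - 1) mod n" by (rule mod_add_self1)
          also have "\<dots> = y - 1" using lt by simp
          finally show ?thesis .
        qed
        show ?thesis unfolding A by (rule B)
      qed
      then have "(b1 + (n - b1 + y - 1)) mod n + 1 = y" using y by simp
      moreover have "n - b1 + y - 1 \<in> {..<m}" using ya y a1b1 by (auto simp: m_def)
      ultimately show ?thesis by (rule image_eqI[OF sym])
    qed
  next
    fix y assume "y \<in> (\<lambda>i. (b1 + i) mod n + 1) ` {..<m}"
    then obtain i where i: "i < m" "y = (b1 + i) mod n + 1" by auto
    show "y \<in> {y. 1 \<le> y \<and> y \<le> n \<and> (y < a1 \<or> b1 < y)}"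
    proof (cases "b1 + i < n")
      case True
      then have "y = b1 + i + 1" using i by simp
      then show ?thesis using True by simp
    next
      case False
      have "b1 + i < 2 * n" using i(1) a1b1 by (simp add: m_def)
      then have "(b1 + i) mod n = b1 + i - n" using False mod_2n by simp
      then have "y = b1 + i - n + 1" using i by simp
      moreover have "b1 + i - n + 1 < a1" using i(1) False a1b1 by (simp add: m_def)
      ultimately show ?thesis using a1b1 by simp
    qed
  qed
  then show ?thesis unfolding cyc_interval_alt T by blast
qed


lemma mod_pred: "1 \<le> y \<Longrightarrow> y \<le> (n::nat) \<Longrightarrow> (y - 1) mod n + 1 = y"
proof -
  assume a: "1 \<le> y" "y \<le> n"
  then have "y - 1 < n" by linarith
  then have "(y - 1) mod n = y - 1" by simp
  then show ?thesis using a by simp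
qed

lemma mod_pred': "1 \<le> y \<Longrightarrow> y \<le> (n::nat) \<Longrightarrow> (y - 1) mod n = y - 1"
  using mod_pred by fastforce

lemma cyc_char:
  assumes n: "n \<ge> 1" and c: "cyc_interval n S"
  shows "S \<subseteq> {1..n} \<and> (\<exists>a b. S = {a..b} \<or> S = {1..n} - {a..b})"
proof -
  obtain a m where S0: "S = (\<lambda>i. (a + i) mod n + 1) ` {..<m}" using c unfolding cyc_interval_alt by blast
  define r where "r = a mod n"
  have rn: "r < n" using n by (simp add: r_def)
  have eqf: "(a + i) mod n = (r + i) mod n" for i by (simp add: r_def mod_add_left_eq)
  have S: "S = (\<lambda>i. (r + i) mod n + 1) ` {..<m}" unfolding S0 eqf ..
  have sub: "S \<subseteq> {1..n}"
  proof
    fix y assume "y \<in> S"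
    then obtain i where "y = (r + i) mod n + 1" using S by blast
    moreover have "(r + i) mod n < n" using n by simp
    ultimately show "y \<in> {1..n}" by simp
  qed
  have val: "(r + i) mod n = (if r + i < n then r + i else r + i - n)" if "i < n" for i
  proof (cases "r + i < n")
    case True then show ?thesis by simp
  next
    case False
    then have "(r + i) mod n = r + i - n" using mod_2n[of n "r + i"] that rn by simp
    then show ?thesis using False by simp
  qed
  have "\<exists>a b. S = {a..b} \<or> S = {1..n} - {a..b}"
  proof (cases "n \<le> m")
    case True
    have "{1..n} \<subseteq> S"
    proof
      fix y assume y: "y \<in> {1..n}"
      show "y \<in> S"
      proof (cases "r \<le> y - 1")
        case True
        have "(r + (y - 1 - r)) mod n + 1 = y"
        proof -
          have A: "r + (y - 1 - r) = y - 1" using True by simp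
          show ?thesis unfolding A using y by (intro mod_pred) auto
        qed
        moreover have "y - 1 - r \<in> {..<m}" using y \<open>n \<le> m\<close> by auto
        ultimately show ?thesis unfolding S by (rule image_eqI[OF sym])
      next
        case False
        have i: "n + (y - 1) - r < n" using False rn by arith
        have "(r + (n + (y - 1) - r)) mod n = y - 1"
        proof -
          have A: "r + (n + (y - 1) - r) = n + (y - 1)" using rn by simp
          have "(n + (y - 1)) mod n = (y - 1) mod n" by (rule mod_add_self1)
          also have "\<dots> = y - 1" using y by (intro mod_pred') auto
          finally show ?thesis unfolding A .
        qed
        then have "(r + (n + (y - 1) - r)) mod n + 1 = y" using y by auto
        moreover have "n + (y - 1) - r \<in> {..<m}" using i \<open>n \<le> m\<close> by simp
        ultimately show ?thesis unfolding S by (rule image_eqI[OF sym])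
      qed
    qed
    then have "S = {1..n} - {1..0}" using sub by auto
    then show ?thesis by blast
  next
    case False
    then have mn: "m < n" by simp
    show ?thesis
    proof (cases "r + m \<le> n")
      case True
      have "S = {r + 1..r + m}"
      proof (rule set_eqI, rule iffI)
        fix y assume "y \<in> S"
        then obtain i where i: "i < m" "y = (r + i) mod n + 1" using S by blast
        have "r + i < n" using i(1) True by linarith
        then show "y \<in> {r + 1..r + m}" using i by simp
      next
        fix y assume y: "y \<in> {r + 1..r + m}"
        have "r + (y - r - 1) < n" using y True by auto
        then have "(r + (y - r - 1)) mod n + 1 = y"
        proof -
          assume lt: "r + (y - r - 1) < n"
          have A: "r + (y - r - 1) = y - 1" using y  by auto
          show ?thesis using y lt unfolding A by (intro mod_pred) auto
        qed
        moreover have "y - r - 1 \<in> {..<m}" using y by auto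
        ultimately show "y \<in> S" unfolding S by (rule image_eqI[OF sym])
      qed
      then show ?thesis by blast
    next
      case False
      have "S = {1..n} - {r + m - n + 1..r}"
      proof (rule set_eqI, rule iffI)
        fix y assume "y \<in> S"
        then obtain i where i: "i < m" "y = (r + i) mod n + 1" using S by blast
        show "y \<in> {1..n} - {r + m - n + 1..r}"
        proof (cases "r + i < n")
          case True
          then have "y = r + i + 1" using i by simp
          then show ?thesis using True by simp
        next
          case False2: False
          have "(r + i) mod n = r + i - n" using val[of i] i(1) mn False2 by simp
          then have "y = r + i - n + 1" using i by simp
          moreover have "r + i - n + 1 < r + m - n + 1" using i(1) False2 by simp
          ultimately show ?thesis using \<open>y \<in> S\<close> sub by auto
        qed
      next
        fix y assume y: "y \<in> {1..n} - {r + m - n + 1..r}"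
        show "y \<in> S"
        proof (cases "r < y")
          case True
          have "r + (y - r - 1) < n" using y True by auto
          then have "(r + (y - r - 1)) mod n + 1 = y"
          proof -
            assume lt: "r + (y - r - 1) < n"
            have A: "r + (y - r - 1) = y - 1" using y True by auto
            show ?thesis using y lt unfolding A by (intro mod_pred) auto
          qed
          moreover have "y - r - 1 \<in> {..<m}" using y True False by auto
          ultimately show "y \<in> S" unfolding S by (rule image_eqI[OF sym])
        next
          case False3: False
          then have yl: "y < r + m - n + 1" using y by auto
          have "(r + (n + (y - 1) - r)) mod n = y - 1"
          proof -
            have A: "r + (n + (y - 1) - r) = n + (y - 1)" using rn by simp
            have "(n + (y - 1)) mod n = (y - 1) mod n" by (rule mod_add_self1)
            also have "\<dots> = y - 1" using y by (intro mod_pred') auto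
            finally show ?thesis unfolding A .
          qed
          then have "(r + (n + (y - 1) - r)) mod n + 1 = y" using y by auto
          moreover have "n + (y - 1) - r \<in> {..<m}" using yl y False3 False rn by auto
          ultimately show "y \<in> S" unfolding S by (rule image_eqI[OF sym])
        qed
      qed
      then show ?thesis by blast
    qed
  qed
  then show ?thesis using sub by blast
qed


lemma cyc_sub_ord:
  assumes n: "n \<ge> 1" and c: "cyc_interval n S" and sub: "S \<subseteq> {1..n-1}"
  shows "\<exists>a b. S = {a..(b::nat)}"
proof -
  obtain a b where ab: "S = {a..b} \<or> S = {1..n} - {a..b}" using cyc_char[OF n c] by blast
  show ?thesis
  proof (cases "S = {a..b}")
    case True then show ?thesis by blast
  next
    case False
    then have S: "S = {1..n} - {a..b}" using ab by blast
    have "n \<notin> S" using sub n by auto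
    then have nab: "a \<le> n" "n \<le> b" using S n by auto
    have "S = {1..a-1}"
    proof (rule set_eqI)
      fix x
      show "x \<in> S \<longleftrightarrow> x \<in> {1..a-1}" using S nab by auto
    qed
    then show ?thesis by blast
  qed
qed

lemma cyc_compl_ord:
  assumes n: "n \<ge> 1" and c: "cyc_interval n S" and nS: "n \<in> S"
  shows "\<exists>a b. {1..n} - S = {a..(b::nat)}"
proof -
  have sub: "S \<subseteq> {1..n}" using cyc_char[OF n c] by blast
  obtain a b where ab: "S = {a..b} \<or> S = {1..n} - {a..b}" using cyc_char[OF n c] by blast
  show ?thesis
  proof (cases "S = {a..b}")
    case True
    then have nab: "a \<le> n" "n \<le> b" using nS by auto
    have "{1..n} - S = {1..a-1}"
    proof (rule set_eqI)
      fix x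
      show "x \<in> {1..n} - S \<longleftrightarrow> x \<in> {1..a-1}" using True nab by auto
    qed
    then show ?thesis by blast
  next
    case False
    then have S: "S = {1..n} - {a..b}" using ab by blast
    have "{1..n} - S = {max a 1..min b n}"
    proof (rule set_eqI)
      fix x
      show "x \<in> {1..n} - S \<longleftrightarrow> x \<in> {max a 1..min b n}" using S by auto
    qed
    then show ?thesis by blast
  qed
qed

lemma cyc_first_block:
  assumes n: "n \<ge> 1" and S: "S = {a..(b::nat)}" and sub: "S \<subseteq> {1..n-1}"
    and c: "cyc_interval n (insert n S)"
  shows "S = {1..card S} \<or> S = {n - card S..n-1}"
proof (cases "a \<le> b")
  case False
  then have "S = {}" using S by simp
  then show ?thesis by simp
next
  case True
  have ab: "1 \<le> a" "b \<le> n - 1" using sub S True by auto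
  have cS: "card S = b + 1 - a" using S by simp
  obtain c d where cd: "insert n S = {c..d} \<or> insert n S = {1..n} - {c..d}"
    using cyc_char[OF n c] by blast
  show ?thesis
  proof (cases "insert n S = {c..d}")
    case T: True
    have bn: "b = n - 1"
    proof (rule ccontr)
      assume "b \<noteq> n - 1"
      then have b1: "b + 1 < n" using ab by simp
      have "a \<in> {c..d}" "n \<in> {c..d}" using T S True by auto
      then have "b + 1 \<in> {c..d}" using b1 True by auto
      then have "b + 1 \<in> insert n S" using T by simp
      then show False using S b1 by auto
    qed
    then have "n - card S = a" using cS ab True by simp
    then have "S = {n - card S..n-1}" using S bn by simp
    then show ?thesis by blast
  next
    case T: False
    then have T: "insert n S = {1..n} - {c..d}" using cd by blast
    have "a = 1 \<or> b = n - 1"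
    proof (rule ccontr)
      assume "\<not> (a = 1 \<or> b = n - 1)"
      then have a1: "a > 1" and b1: "b + 1 < n" using ab by auto
      have "a - 1 \<notin> insert n S" using S a1 b1 True by auto
      then have "a - 1 \<in> {c..d}" using T a1 b1 True ab by auto
      moreover have "b + 1 \<notin> insert n S" using S b1 True by auto
      then have "b + 1 \<in> {c..d}" using T a1 b1 True ab by auto
      ultimately have "a \<in> {c..d}" using True by auto
      then have "a \<notin> insert n S" using T by auto
      then show False using S True by auto
    qed
    then show ?thesis
    proof
      assume "a = 1"
      then have "S = {1..card S}" using S cS by simp
      then show ?thesis by blast
    next
      assume bn: "b = n - 1"
      then have "n - card S = a" using cS ab True by simp
      then have "S = {n - card S..n-1}" using S bn by simp
      then show ?thesis by blast
    qed
  qed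
qed

definition fw :: "nat \<Rightarrow> nat list \<Rightarrow> nat \<Rightarrow> nat" where
  "fw n w = (\<lambda>i. if i \<in> {1..n} then w ! (i - 1) else i)"

lemma len_perm_word: "distinct w \<Longrightarrow> set w = {1..n} \<Longrightarrow> length w = n"
  using distinct_card[of w] by simp

lemma fw_permutes:
  assumes d: "distinct w" and s: "set w = {1..n}"
  shows "fw n w permutes {1..n}"
proof (rule bij_imp_permutes)
  have len: "length w = n" using len_perm_word[OF d s] .
  show "bij_betw (fw n w) {1..n} {1..n}"
  proof (rule bij_betw_imageI)
    show "inj_on (fw n w) {1..n}"
    proof (rule inj_onI)
      fix i j assume ij: "i \<in> {1..n}" "j \<in> {1..n}" "fw n w i = fw n w j"
      then have "w ! (i - 1) = w ! (j - 1)" by (simp add: fw_def)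
      moreover have "i - 1 < length w" "j - 1 < length w" using ij len by auto
      ultimately have "i - 1 = j - 1" using d nth_eq_iff_index_eq by blast
      then show "i = j" using ij by auto
    qed
    show "fw n w ` {1..n} = {1..n}"
    proof (rule set_eqI, rule iffI)
      fix y assume "y \<in> fw n w ` {1..n}"
      then obtain i where i: "i \<in> {1..n}" "y = w ! (i - 1)" by (auto simp: fw_def)
      then have "i - 1 < length w" using len by auto
      then have "y \<in> set w" using i(2) by simp
      then show "y \<in> {1..n}" using s by simp
    next
      fix y assume "y \<in> {1..n}"
      then have "y \<in> set w" using s by simp
      then obtain k where k: "k < length w" "w ! k = y" by (auto simp: in_set_conv_nth)
      then have "fw n w (k + 1) = y" "k + 1 \<in> {1..n}" using len by (auto simp: fw_def)
      then show "y \<in> fw n w ` {1..n}" by (metis imageI)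
    qed
  qed
  show "fw n w x = x" if "x \<notin> {1..n}" for x using that by (auto simp: fw_def)
qed

lemma word_props:
  assumes "p permutes {1..n}"
  shows "distinct (map p [1..<Suc n])" "set (map p [1..<Suc n]) = {1..n}" "length (map p [1..<Suc n]) = n"
proof -
  have "inj_on p (set [1..<Suc n])" using permutes_inj_on[OF assms] .
  then show "distinct (map p [1..<Suc n])" by (simp add: distinct_map)
  have "set [1..<Suc n] = {1..n}" by auto
  then show "set (map p [1..<Suc n]) = {1..n}" using permutes_image[OF assms] by simp
  show "length (map p [1..<Suc n]) = n" by simp
qed

lemma fw_word:
  assumes "p permutes {1..n}"
  shows "fw n (map p [1..<Suc n]) = p"
proof
  fix i
  show "fw n (map p [1..<Suc n]) i = p i"
  proof (cases "i \<in> {1..n}")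
    case True
    then have "map p [1..<Suc n] ! (i - 1) = p (1 + (i - 1))" by (intro nth_map_upt) auto
    then have "map p [1..<Suc n] ! (i - 1) = p i" using True by simp
    then show ?thesis using True by (simp add: fw_def)
  next
    case False
    then show ?thesis using permutes_not_in[OF assms False] by (auto simp: fw_def)
  qed
qed

lemma fw_image:
  assumes "length w = n" "j \<le> n"
  shows "fw n w ` {1..j} = set (take j w)"
proof (rule set_eqI, rule iffI)
  fix y assume "y \<in> fw n w ` {1..j}"
  then obtain i where i: "i \<in> {1..j}" "y = w ! (i - 1)" using assms by (auto simp: fw_def)
  then have "i - 1 < length (take j w)" "take j w ! (i - 1) = y" using assms by auto
  then show "y \<in> set (take j w)" by (metis nth_mem)
next
  fix y assume "y \<in> set (take j w)"
  then obtain k where k: "k < length (take j w)" "take j w ! k = y" by (auto simp: in_set_conv_nth)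
  then have "fw n w (k + 1) = y" "k + 1 \<in> {1..j}" using assms by (auto simp: fw_def)
  then show "y \<in> fw n w ` {1..j}" by (metis imageI)
qed

lemma fw_inv:
  assumes d: "distinct w" and s: "set w = {1..n}" and w: "w = X @ v # Y"
  shows "inv (fw n w) v = length X + 1"
proof -
  have len: "length w = n" using len_perm_word[OF d s] .
  have "fw n w (length X + 1) = v" using len w by (simp add: fw_def)
  then show ?thesis using permutes_inv_eq[OF fw_permutes[OF d s]] by blast
qed

lemma Des_fw: "length w = n \<Longrightarrow> Des n (fw n w) = seq_des w"
  by (auto simp: Des_def seq_des_def fw_def)

lemma cDes_Des: "cDes n p = Des n p \<union> (if n \<ge> 1 \<and> p n > p 1 then {n} else {})"
  by (auto simp: cDes_def Des_def)

lemma cDes_fw: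
  assumes "length w = n" "n \<ge> 1"
  shows "cDes n (fw n w) = seq_des w \<union> (if last w > hd w then {n} else {})"
proof -
  have ne: "w \<noteq> []" using assms by auto
  have "fw n w n = last w" using assms ne by (simp add: fw_def last_conv_nth)
  moreover have "fw n w 1 = hd w" using assms ne by (simp add: fw_def hd_conv_nth)
  ultimately show ?thesis using cDes_Des[of n "fw n w"] Des_fw[OF assms(1)] assms(2) by simp
qed

lemma seq_des_mid:
  assumes "\<forall>x\<in>set X. x < n" "\<forall>y\<in>set Y. y < n"
  shows "seq_des (X @ n # Y) = seq_des X \<union> (if Y \<noteq> [] then {length X + 1} else {}) \<union>
           (\<lambda>i. i + (length X + 1)) ` seq_des Y"
proof -
  have nl: "\<not> (X \<noteq> [] \<and> n # Y \<noteq> [] \<and> last X > hd (n # Y))"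
  proof
    assume a: "X \<noteq> [] \<and> n # Y \<noteq> [] \<and> last X > hd (n # Y)"
    then have "last X \<in> set X" by simp
    then have "last X < n" using assms(1) by blast
    then show False using a by simp
  qed
  have c: "seq_des (n # Y) = (if Y \<noteq> [] then {1} else {}) \<union> Suc ` seq_des Y"
    using seq_des_Cons[of n Y] assms(2) by (cases Y) auto
  have "seq_des (X @ n # Y) = seq_des X \<union> (\<lambda>i. i + length X) ` seq_des (n # Y)"
    using seq_des_append[of X "n # Y"] nl by (simp only: if_False) simp
  also have "\<dots> = seq_des X \<union> (if Y \<noteq> [] then {length X + 1} else {}) \<union>
           (\<lambda>i. i + (length X + 1)) ` seq_des Y"
    unfolding c by (auto simp: image_Un image_image)
  finally show ?thesis .
qed

lemma proj1:
  assumes "\<forall>x\<in>set X. x < n" "\<forall>y\<in>set Y. y < n"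
  shows "seq_des (X @ n # Y) \<inter> {1..length X + 1 - 2} = seq_des X"
proof -
  have a: "seq_des X \<subseteq> {1..length X + 1 - 2}" using seq_des_sub[of X] by force
  have b: "(if Y \<noteq> [] then {length X + 1} else {}) \<inter> {1..length X + 1 - 2} = {}" by auto
  have c: "(\<lambda>i. i + (length X + 1)) ` seq_des Y \<inter> {1..length X + 1 - 2} = {}" by auto
  show ?thesis unfolding seq_des_mid[OF assms] using a b c by blast
qed

lemma proj2:
  assumes "\<forall>x\<in>set X. x < n" "\<forall>y\<in>set Y. y < n"
  shows "{i - (length X + 1) |i. i \<in> seq_des (X @ n # Y) \<and> length X + 1 < i} = seq_des Y"
proof (rule set_eqI, rule iffI)
  fix k assume "k \<in> {i - (length X + 1) |i. i \<in> seq_des (X @ n # Y) \<and> length X + 1 < i}"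
  then obtain i where i: "k = i - (length X + 1)" "i \<in> seq_des (X @ n # Y)" "length X + 1 < i" by blast
  have "i \<notin> seq_des X" using i(3) seq_des_sub[of X] by auto
  then have "i \<in> (\<lambda>i. i + (length X + 1)) ` seq_des Y" using i(2,3) seq_des_mid[OF assms] by (auto split: if_splits)
  then show "k \<in> seq_des Y" using i(1) by auto
next
  fix k assume k: "k \<in> seq_des Y"
  then have "k \<ge> 1" using seq_des_sub[of Y] by auto
  moreover have "k + (length X + 1) \<in> seq_des (X @ n # Y)" using k seq_des_mid[OF assms] by auto
  ultimately show "k \<in> {i - (length X + 1) |i. i \<in> seq_des (X @ n # Y) \<and> length X + 1 < i}"
    by (intro CollectI exI[of _ "k + (length X + 1)"]) simp
qed

lemma flag_mid:
  fixes X Y :: "nat list"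
  assumes "\<forall>x\<in>set X. x < n" "\<forall>y\<in>set Y. y < n"
  shows "last (X @ n # Y) > hd (X @ n # Y) \<longleftrightarrow> X \<noteq> [] \<and> (Y = [] \<or> last Y > hd X)"
proof (cases X)
  case Nil
  then show ?thesis using assms(2) by (cases Y rule: rev_cases) auto
next
  case (Cons a X')
  then show ?thesis using assms(1) by (cases Y rule: rev_cases) auto
qed


lemma below_n:
  fixes w X Y :: "nat list"
  assumes d: "distinct w" and s: "set w = {1..n}" and w: "w = X @ n # Y"
  shows "\<forall>x\<in>set X. x < n" "\<forall>y\<in>set Y. y < n" "n \<ge> 1"
proof -
  have nX: "n \<notin> set X" "n \<notin> set Y" using d w by auto
  have sX: "set X \<subseteq> {1..n}" "set Y \<subseteq> {1..n}" using s w by auto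
  show "\<forall>x\<in>set X. x < n"
  proof
    fix x assume x: "x \<in> set X"
    then have "x \<le> n" "x \<noteq> n" using nX sX by auto
    then show "x < n" by simp
  qed
  show "\<forall>x\<in>set Y. x < n"
  proof
    fix x assume x: "x \<in> set Y"
    then have "x \<le> n" "x \<noteq> n" using nX sX by auto
    then show "x < n" by simp
  qed
  have "n \<in> set w" using w by simp
  then show "n \<ge> 1" using s by simp
qed

definition S1of :: "nat \<Rightarrow> nat list \<Rightarrow> nat list \<Rightarrow> nat set" where
  "S1of n X Y = (if X \<noteq> [] \<and> (Y = [] \<or> last Y > hd X) then {1..length X + 1 - 1} else {1..n-1} - {1..n - (length X + 1)})"

lemma phi_fw:
  assumes d: "distinct w" and s: "set w = {1..n}" and w: "w = X @ n # Y"
  shows "phi n (fw n w) = fw n (lu_arr (S1of n X Y) (seq_des X) @ [n] @ ru_arr ({1..n-1} - S1of n X Y) (seq_des Y))"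
proof -
  note b = below_n[OF d s w]
  have len: "length w = n" using len_perm_word[OF d s] .
  have j: "inv (fw n w) n = length X + 1" using fw_inv[OF d s w] .
  have D: "Des n (fw n w) = seq_des w" using Des_fw[OF len] .
  have "n \<notin> seq_des w" using seq_des_sub[of w] len by auto
  then have c0: "(n \<in> cDes n (fw n w)) = (last w > hd w)" using cDes_fw[OF len b(3)] by auto
  have fl: "(last w > hd w) = (X \<noteq> [] \<and> (Y = [] \<or> last Y > hd X))"
    using flag_mid[OF b(1,2)] w by simp
  have c: "(n \<in> cDes n (fw n w)) = (X \<noteq> [] \<and> (Y = [] \<or> last Y > hd X))"
    using c0 fl by simp
  have D': "Des n (fw n w) = seq_des (X @ n # Y)" using D w by simp
  have p1: "Des n (fw n w) \<inter> {1..length X + 1 - 2} = seq_des X" unfolding D' using proj1[OF b(1,2)] .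
  have p2: "{i - (length X + 1) |i. i \<in> Des n (fw n w) \<and> i > length X + 1} = seq_des Y"
    unfolding D' using proj2[OF b(1,2)] .
  show ?thesis
    unfolding phi_def Let_def j p1 p2 c S1of_def unfolding fw_def ..
qed

lemma cyc_pow: "n \<ge> 1 \<Longrightarrow> (cyc n ^^ k) i = (if i \<in> {1..n} then (i - 1 + k) mod n + 1 else i)"
proof (induction k)
  case 0
  show ?case
  proof (cases "i \<in> {1..n}")
    case True
    then show ?thesis using mod_pred[of i n] by simp
  qed auto
next
  case (Suc k)
  show ?case
  proof (cases "i \<in> {1..n}")
    case True
    define r where "r = (i - 1 + k) mod n"
    have rn: "r < n" using True by (simp add: r_def)
    have "(cyc n ^^ Suc k) i = cyc n (r + 1)" using Suc.IH[OF Suc.prems] True by (simp add: r_def)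
    also have "\<dots> = (if Suc r = n then 0 else Suc r) + 1" using rn by (auto simp: cyc_def)
    also have "\<dots> = (i - 1 + Suc k) mod n + 1" by (simp add: r_def mod_Suc)
    finally show ?thesis using True by simp
  next
    case False
    then have "cyc n i = i" using Suc.prems by (auto simp: cyc_def)
    then show ?thesis using Suc.IH[OF Suc.prems] False by auto
  qed
qed

lemma fw_rot:
  assumes "length v = n" "n \<ge> 1"
  shows "fw n v \<circ> (cyc n ^^ k) = fw n (rotate k v)"
proof
  fix i
  show "(fw n v \<circ> (cyc n ^^ k)) i = fw n (rotate k v) i"
  proof (cases "i \<in> {1..n}")
    case True
    have m: "(i - 1 + k) mod n < n" using assms by simp
    have inr: "(i - 1 + k) mod n + 1 \<in> {1..n}" using m by simp
    have e1: "(cyc n ^^ k) i = (i - 1 + k) mod n + 1" using True by (simp add: cyc_pow[OF assms(2)])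
    have "(fw n v \<circ> (cyc n ^^ k)) i = fw n v ((i - 1 + k) mod n + 1)" using e1 by simp
    also have "\<dots> = v ! ((i - 1 + k) mod n)" using inr unfolding fw_def by simp
    finally have "(fw n v \<circ> (cyc n ^^ k)) i = v ! ((i - 1 + k) mod n)" .
    moreover have "rotate k v ! (i - 1) = v ! ((k + (i - 1)) mod length v)"
      using True assms by (intro nth_rotate) auto
    moreover have "fw n (rotate k v) i = rotate k v ! (i - 1)" using True by (simp add: fw_def)
    moreover have "(i - 1 + k) mod n = (k + (i - 1)) mod length v" using assms(1) by (simp add: add.commute)
    ultimately show ?thesis by simp
  next
    case False
    then show ?thesis by (auto simp: cyc_pow[OF assms(2)] fw_def)
  qed
qed

lemma permutes_fix: "p permutes S \<Longrightarrow> p x = x \<Longrightarrow> p permutes (S - {x})"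
  unfolding permutes_def by blast

lemma LC_iff:
  assumes n: "n \<ge> 1"
  shows "p \<in> LC n \<longleftrightarrow> (\<exists>A B. distinct (A @ B) \<and> set (A @ B) = {1..n-1} \<and> left_unimodal (A @ B) \<and> p = fw n (B @ n # A))"
proof
  assume "p \<in> LC n"
  then obtain s k where p: "p = s \<circ> (cyc n ^^ k)" and sL: "s \<in> Lset n" unfolding LC_def by blast
  have sp: "s permutes {1..n-1}" and lu: "left_unimodal (map s [1..<n])" using sL by (auto simp: Lset_def)
  define u where "u = map s [1..<n]"
  have du: "distinct u" using permutes_inj_on[OF sp] by (simp add: u_def distinct_map)
  have "set [1..<n] = {1..n-1}" using n by auto
  then have su: "set u = {1..n-1}" using permutes_image[OF sp] by (simp add: u_def)
  have lenu: "length u = n - 1" by (simp add: u_def)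
  have sfw: "s = fw n (u @ [n])"
  proof
    fix i
    show "s i = fw n (u @ [n]) i"
    proof (cases "i \<in> {1..n}")
      case True
      show ?thesis
      proof (cases "i = n")
        case True
        have "n \<notin> {1..n-1}" using n by simp
        then have "s n = n" using permutes_not_in[OF sp, of n] by simp
        then show ?thesis using True n lenu by (simp add: fw_def nth_append)
      next
        case False
        then have lt: "i - 1 < n - 1" using True by auto
        then have "u ! (i - 1) = s (1 + (i - 1))" by (simp add: u_def)
        then show ?thesis using True False lenu lt by (simp add: fw_def nth_append)
      qed
    next
      case False
      then show ?thesis using permutes_not_in[OF sp, of i] by (auto simp: fw_def)
    qed
  qed
  have lun: "length (u @ [n]) = n" using lenu n by simp
  have "p = fw n (rotate k (u @ [n]))" unfolding p sfw using fw_rot[OF lun n] .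
  also have "rotate k (u @ [n]) = rotate (k mod n) (u @ [n])" using lun by (metis rotate_conv_mod)
  finally have p2: "p = fw n (rotate (k mod n) (u @ [n]))" .
  define t where "t = k mod n"
  have "t < n" using n by (simp add: t_def)
  then have tl: "t \<le> length u" using lenu by simp
  define A where "A = take t u"
  define B where "B = drop t u"
  have uAB: "u = A @ B" by (simp add: A_def B_def)
  have lA: "length A = t" using tl by (simp add: A_def)
  have "rotate t (u @ [n]) = B @ n # A"
    using rotate_append[of A "B @ [n]"] uAB lA by simp
  then have "p = fw n (B @ n # A)" using p2 by (simp add: t_def)
  then show "\<exists>A B. distinct (A @ B) \<and> set (A @ B) = {1..n-1} \<and> left_unimodal (A @ B) \<and> p = fw n (B @ n # A)"
  proof (intro exI conjI)
    show "distinct (A @ B)" "set (A @ B) = {1..n-1}" using du su uAB by simp_all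
    show "left_unimodal (A @ B)" using lu uAB by (simp add: u_def)
  qed simp
next
  assume "\<exists>A B. distinct (A @ B) \<and> set (A @ B) = {1..n-1} \<and> left_unimodal (A @ B) \<and> p = fw n (B @ n # A)"
  then obtain A B where AB: "distinct (A @ B)" "set (A @ B) = {1..n-1}" "left_unimodal (A @ B)" "p = fw n (B @ n # A)"
    by blast
  define s where "s = fw n (A @ B @ [n])"
  have nn: "n \<notin> set (A @ B)" using AB(2) by auto
  have d1: "distinct (A @ B @ [n])" using AB(1) nn by auto
  have "insert n {1..n-1} = {1..n}" using n by auto
  then have s1: "set (A @ B @ [n]) = {1..n}" using AB(2) by simp
  have len1: "length (A @ B @ [n]) = n" using len_perm_word[OF d1 s1] .
  have sp1: "s permutes {1..n}" unfolding s_def using fw_permutes[OF d1 s1] .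
  have e: "n - 1 = length (A @ B)" using len1 by simp
  have "((A @ B) @ [n]) ! length (A @ B) = n" by (rule nth_append_length)
  then have "(A @ B @ [n]) ! (n - 1) = n" unfolding e by simp
  then have snn: "s n = n" using n by (simp add: s_def fw_def)
  have "{1..n} - {n} = {1..n-1}" by auto
  then have sp: "s permutes {1..n-1}" using permutes_fix[OF sp1 snn] by simp
  have ms: "map s [1..<n] = A @ B"
  proof (rule nth_equalityI)
    show "length (map s [1..<n]) = length (A @ B)" using len1 by simp
    fix i assume "i < length (map s [1..<n])"
    then have i: "i < n - 1" by simp
    then have "map s [1..<n] ! i = s (1 + i)" by simp
    also have "\<dots> = (A @ B @ [n]) ! i" using i by (auto simp: s_def fw_def)
    also have "\<dots> = (A @ B) ! i"
    proof -
      have "i < length (A @ B)" using i len1 by simp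
      then show ?thesis using nth_append[of "A @ B" "[n]" i] by simp
    qed
    finally show "map s [1..<n] ! i = (A @ B) ! i" .
  qed
  have sL: "s \<in> Lset n" using sp ms AB(3) by (simp add: Lset_def)
  have "s \<circ> (cyc n ^^ length A) = fw n (rotate (length A) (A @ B @ [n]))"
    unfolding s_def using fw_rot[OF len1 n] .
  also have "rotate (length A) (A @ B @ [n]) = B @ n # A" using rotate_append[of A "B @ [n]"] by simp
  finally have "p = s \<circ> (cyc n ^^ length A)" using AB(4) by (simp only:)
  then show "p \<in> LC n" using sL unfolding LC_def by blast
qed

lemma Des_cDes: "Des n p = cDes n p - {n}"
  by (auto simp: cDes_def Des_def)

lemma phi_dep:
  assumes "inv p n = inv q n" "cDes n p = cDes n q"
  shows "phi n p = phi n q"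
  unfolding phi_def Let_def Des_cDes assms ..

lemma cDes_mid:
  assumes d: "distinct w" and s: "set w = {1..n}" and w: "w = X @ n # Y"
  shows "cDes n (fw n w) = seq_des X \<union> (if Y \<noteq> [] then {length X + 1} else {}) \<union>
           (\<lambda>i. i + (length X + 1)) ` seq_des Y \<union> (if X \<noteq> [] \<and> (Y = [] \<or> last Y > hd X) then {n} else {})"
proof -
  note b = below_n[OF d s w]
  have len: "length w = n" using len_perm_word[OF d s] .
  have fl: "(last w > hd w) = (X \<noteq> [] \<and> (Y = [] \<or> last Y > hd X))"
    using flag_mid[OF b(1,2)] w by simp
  show ?thesis unfolding cDes_fw[OF len b(3)] fl using seq_des_mid[OF b(1,2)] w by simp
qed

lemma n_notin_seq_des:
  assumes d: "distinct w" and s: "set w = {1..n}"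
  shows "n \<notin> seq_des w"
  using seq_des_sub[of w] len_perm_word[OF d s] by auto

lemma S1of_shape:
  assumes "length X + length Y + 1 = n"
  shows "(X \<noteq> [] \<and> (Y = [] \<or> last Y > hd X)) \<Longrightarrow> S1of n X Y = {1..length X} \<and> {1..n-1} - S1of n X Y = {length X + 1..n-1}"
    and "\<not> (X \<noteq> [] \<and> (Y = [] \<or> last Y > hd X)) \<Longrightarrow> S1of n X Y = {n - length X..n-1} \<and> {1..n-1} - S1of n X Y = {1..n - length X - 1}"
proof -
  assume c: "X \<noteq> [] \<and> (Y = [] \<or> last Y > hd X)"
  have "S1of n X Y = {1..length X + 1 - 1}" unfolding S1of_def by (rule if_P[OF c])
  then have "S1of n X Y = {1..length X}" by simp
  moreover have "{1..n-1} - {1..length X} = {length X + 1..n-1}" by auto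
  ultimately show "S1of n X Y = {1..length X} \<and> {1..n-1} - S1of n X Y = {length X + 1..n-1}" by simp
next
  assume c: "\<not> (X \<noteq> [] \<and> (Y = [] \<or> last Y > hd X))"
  have e: "S1of n X Y = {1..n-1} - {1..n - (length X + 1)}" unfolding S1of_def by (rule if_not_P[OF c])
  have "{1..n-1} - {1..n - (length X + 1)} = {n - length X..n-1}" using assms by auto
  moreover have "{1..n-1} - {n - length X..n-1} = {1..n - length X - 1}" using assms by auto
  ultimately show "S1of n X Y = {n - length X..n-1} \<and> {1..n-1} - S1of n X Y = {1..n - length X - 1}"
    using e by simp
qed

lemma set_drop_compl:
  assumes d: "distinct w" and s: "set w = {1..n}"
  shows "set (drop j w) = {1..n} - set (take j w)"
proof -
  have "set (take j w) \<union> set (drop j w) = {1..n}" using s by (metis set_append append_take_drop_id)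
  moreover have "set (take j w) \<inter> set (drop j w) = {}" using d by (rule set_take_disj_set_drop_if_distinct) simp
  ultimately show ?thesis by blast
qed

lemma split_des:
  fixes k :: nat
  assumes "P \<subseteq> {1..<k}" "P' \<subseteq> {1..<k}" "Q \<subseteq> {1..}" "Q' \<subseteq> {1..}" "F \<subseteq> {k}" "F' \<subseteq> {k}"
    and eq: "P \<union> (\<lambda>i. i + k) ` Q \<union> F = P' \<union> (\<lambda>i. i + k) ` Q' \<union> F'"
  shows "P = P'" "Q = Q'" "F = F'"
proof -
  let ?L = "P \<union> (\<lambda>i. i + k) ` Q \<union> F"
  let ?R = "P' \<union> (\<lambda>i. i + k) ` Q' \<union> F'"
  have "P = ?L \<inter> {..<k}" using assms(1,3,5) by auto
  also have "\<dots> = ?R \<inter> {..<k}" using eq by simp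
  also have "\<dots> = P'" using assms(2,4,6) by auto
  finally show "P = P'" .
  have "F = ?L \<inter> {k}" using assms(1,3,5) by auto
  also have "\<dots> = ?R \<inter> {k}" using eq by simp
  also have "\<dots> = F'" using assms(2,4,6) by auto
  finally show "F = F'" .
  have q: "x \<in> Q \<longleftrightarrow> x \<ge> 1 \<and> x + k \<in> ?L" for x using assms(1,3,5) by auto
  have q': "x \<in> Q' \<longleftrightarrow> x \<ge> 1 \<and> x + k \<in> ?R" for x using assms(2,4,6) by auto
  show "Q = Q'"
  proof (rule set_eqI)
    fix x show "x \<in> Q \<longleftrightarrow> x \<in> Q'" unfolding q q' eq ..
  qed
qed



lemma compl_lemma:
  fixes A B :: "nat set"
  assumes "A \<inter> B = {}" "insert n (A \<union> B) = {1..n}" "n \<notin> A" "n \<notin> B"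
  shows "B = {1..n-1} - A"
proof (rule set_eqI)
  fix x
  have "x \<in> {1..n-1} \<longleftrightarrow> x \<in> {1..n} \<and> x \<noteq> n" by auto
  then show "x \<in> B \<longleftrightarrow> x \<in> {1..n-1} - A" using assms by blast
qed

lemma Aset_struct:
  assumes n: "n \<ge> 1" and q: "q \<in> Aset n"
  obtains X Y where "q = fw n (X @ n # Y)" "distinct (X @ n # Y)" "set (X @ n # Y) = {1..n}"
    "left_unimodal X" "right_unimodal Y" "set X = S1of n X Y"
proof -
  have qp: "q permutes {1..n}" and qi: "\<forall>j\<in>{1..n}. cyc_interval n (q ` {1..j})"
    using q by (auto simp: Aset_def)
  define w where "w = map q [1..<Suc n]"
  have d: "distinct w" and s: "set w = {1..n}" and len: "length w = n"
    using word_props[OF qp] by (auto simp: w_def)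
  have qw: "q = fw n w" using fw_word[OF qp] by (simp add: w_def)
  have "n \<in> set w" using s n by simp
  then obtain X Y where w: "w = X @ n # Y" by (metis split_list)
  note b = below_n[OF d s w]
  have pre: "cyc_interval n (set (take j w))" if "1 \<le> j" "j \<le> n" for j
  proof -
    have "cyc_interval n (q ` {1..j})" using qi that by simp
    then show ?thesis using fw_image[OF len that(2)] qw by simp
  qed
  have lX: "length X + length Y + 1 = n" using len w by simp
  have Xsub: "set X \<subseteq> {1..n-1}"
  proof
    fix x assume x: "x \<in> set X"
    then have "x < n" using b(1) by blast
    moreover have "x \<ge> 1" using x s w by auto
    ultimately show "x \<in> {1..n-1}" by simp
  qed
  have Ysub: "set Y \<subseteq> {1..n-1}"
  proof
    fix x assume x: "x \<in> set Y"
    then have "x < n" using b(2) by blast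
    moreover have "x \<ge> 1" using x s w by auto
    ultimately show "x \<in> {1..n-1}" by simp
  qed
  have tX: "\<exists>a b. set (take k X) = {a..(b::nat)}" for k
  proof -
    define m where "m = min k (length X)"
    have tk: "take k X = take m w"
    proof -
      have "take m w = take m X" using w by (simp add: m_def)
      moreover have "take k X = take m X" by (simp add: m_def min_def)
      ultimately show ?thesis by simp
    qed
    show ?thesis
    proof (cases "m = 0")
      case True then show ?thesis using tk by (intro exI[of _ 1] exI[of _ 0]) simp
    next
      case False
      have "m \<le> n" using lX by (simp add: m_def)
      then have ci: "cyc_interval n (set (take m w))" using pre False by simp
      have "set (take m w) \<subseteq> {1..n-1}" using tk[symmetric] Xsub set_take_subset[of k X] by simp
      then show ?thesis using cyc_sub_ord[OF n ci] tk by simp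
    qed
  qed
  have dX: "distinct X" using d w by simp
  have luX: "left_unimodal X" using interval_prefix_lu[OF dX] tX by blast
  have tY: "\<exists>a b. set (take k (rev Y)) = {a..(b::nat)}" for k
  proof -
    define m where "m = length Y - k"
    have m: "m \<le> length Y" by (simp add: m_def)
    have st: "set (take k (rev Y)) = set (drop m Y)" by (simp add: take_rev m_def)
    define j where "j = length X + 1 + m"
    have dj: "drop j w = drop m Y" using w by (simp add: j_def)
    have j: "1 \<le> j" "j \<le> n" using lX m by (auto simp: j_def)
    have tj: "take j w = X @ n # take m Y" using w by (simp add: j_def)
    then have nin: "n \<in> set (take j w)" by simp
    obtain a b where "{1..n} - set (take j w) = {a..b}" using cyc_compl_ord[OF n pre[OF j] nin] by blast
    then have "set (drop j w) = {a..b}" using set_drop_compl[OF d s] by simp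
    then show ?thesis using st dj by auto
  qed
  have dY: "distinct (rev Y)" using d w by simp
  have luY: "right_unimodal Y" unfolding right_unimodal_def using interval_prefix_lu[OF dY] tY by blast
  obtain a b where ab: "set X = {a..b}" using tX[of "length X"] by auto
  have ci2: "cyc_interval n (insert n (set X))"
  proof -
    have "take (length X + 1) w = X @ [n]" using w by simp
    then have "set (take (length X + 1) w) = insert n (set X)" by simp
    moreover have "length X + 1 \<le> n" using lX by simp
    ultimately show ?thesis using pre[of "length X + 1"] by simp
  qed
  have cX: "card (set X) = length X" using distinct_card[OF dX] .
  have fb: "set X = {1..length X} \<or> set X = {n - length X..n-1}"
    using cyc_first_block[OF n ab Xsub ci2] cX by simp
  have sY: "set Y = {1..n-1} - set X"
  proof -
    have "set X \<inter> set Y = {}" "n \<notin> set X" "n \<notin> set Y" using d w by auto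
    moreover have "insert n (set X \<union> set Y) = {1..n}" using s w by auto
    ultimately show ?thesis using compl_lemma by blast
  qed
  have S: "set X = S1of n X Y"
  proof (cases "X \<noteq> [] \<and> (Y = [] \<or> last Y > hd X)")
    case True
    have e: "S1of n X Y = {1..length X}" using S1of_shape(1)[OF lX True] by simp
    show ?thesis
    proof (cases "Y = []")
      case True
      then have "length X = n - 1" using lX by simp
      then show ?thesis using fb e by auto
    next
      case False
      then have lh: "last Y > hd X" using True by simp
      show ?thesis
      proof (rule ccontr)
        assume ne: "set X \<noteq> S1of n X Y"
        then have sx: "set X = {n - length X..n-1}" using fb e by auto
        have "hd X \<in> set X" using True by simp
        then have h: "hd X \<ge> n - length X" using sx by simp
        have "last Y \<in> set Y" using False by simp
        then have "last Y < n - length X" using sY sx by auto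
        then show False using h lh by simp
      qed
    qed
  next
    case False
    have e: "S1of n X Y = {n - length X..n-1}" using S1of_shape(2)[OF lX False] by simp
    show ?thesis
    proof (cases "X = []")
      case True
      then show ?thesis using e n by simp
    next
      case XF: False
      then have Yn: "Y \<noteq> []" "\<not> last Y > hd X" using False by auto
      show ?thesis
      proof (rule ccontr)
        assume ne: "set X \<noteq> S1of n X Y"
        then have sx: "set X = {1..length X}" using fb e by auto
        have "hd X \<in> set X" using XF by simp
        then have h: "hd X \<le> length X" using sx by simp
        have "last Y \<in> set Y" using Yn by simp
        then have "last Y > length X" using sY sx by auto
        then show False using h Yn(2) by simp
      qed
    qed
  qed
  show ?thesis
    using that[of X Y] qw w d s luX luY S by simp
qed

lemma phi_Aset:
  assumes n: "n \<ge> 1" and q: "q \<in> Aset n"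
  shows "phi n q = q"
proof -
  obtain X Y where XY: "q = fw n (X @ n # Y)" "distinct (X @ n # Y)" "set (X @ n # Y) = {1..n}"
    "left_unimodal X" "right_unimodal Y" "set X = S1of n X Y"
    using Aset_struct[OF n q] by blast
  have sY: "set Y = {1..n-1} - S1of n X Y"
  proof -
    have "set X \<inter> set Y = {}" "n \<notin> set X" "n \<notin> set Y" using XY(2) by auto
    moreover have "insert n (set X \<union> set Y) = {1..n}" using XY(3) by auto
    ultimately show ?thesis using compl_lemma XY(6) by metis
  qed
  have "lu_arr (S1of n X Y) (seq_des X) = X" using lu_arr_eq[OF XY(6) XY(4)] by simp
  moreover have "ru_arr ({1..n-1} - S1of n X Y) (seq_des Y) = Y" using ru_arr_eq[OF sY XY(5)] by simp
  ultimately show ?thesis using phi_fw[OF XY(2) XY(3) refl] XY(1) by simp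
qed


lemma set_take_compl:
  assumes d: "distinct w" and s: "set w = {1..n}"
  shows "set (take j w) = {1..n} - set (drop j w)"
proof -
  have "set (take j w) \<subseteq> {1..n}" using s set_take_subset by metis
  then show ?thesis using set_drop_compl[OF d s, of j] by blast
qed

lemma LC_phi:
  assumes n: "n \<ge> 1" and p: "p \<in> LC n"
  shows "cDes n (phi n p) = cDes n p \<and> inv (phi n p) n = inv p n \<and> phi n p \<in> Aset n"
proof -
  obtain A B where AB: "distinct (A @ B)" "set (A @ B) = {1..n-1}" "left_unimodal (A @ B)" "p = fw n (B @ n # A)"
    using p LC_iff[OF n] by blast
  define w where "w = B @ n # A"
  have nn: "n \<notin> set (A @ B)" using AB(2) by auto
  have dw: "distinct w" using AB(1) nn by (auto simp: w_def)
  have "insert n {1..n-1} = {1..n}" using n by auto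
  then have sw: "set w = {1..n}" using AB(2) by (auto simp: w_def)
  have lens: "length B + length A + 1 = n" using len_perm_word[OF dw sw] by (simp add: w_def)
  define S where "S = S1of n B A"
  define C where "C = {1..n-1} - S"
  define c where "c = (B \<noteq> [] \<and> (A = [] \<or> last A > hd B))"
  have sh1: "c \<Longrightarrow> S = {1..length B} \<and> C = {length B + 1..n-1}"
    unfolding S_def C_def c_def by (rule S1of_shape(1)[OF lens])
  have sh2: "\<not> c \<Longrightarrow> S = {n - length B..n-1} \<and> C = {1..n - length B - 1}"
    unfolding S_def C_def c_def by (rule S1of_shape(2)[OF lens])
  have Sint: "\<exists>a b. S = {a..(b::nat)}" using sh1 sh2 by blast
  have Cint: "\<exists>a b. C = {a..(b::nat)}" using sh1 sh2 by blast
  have Ssub: "S \<subseteq> {1..n-1}" using sh1 sh2 lens by (cases c) auto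
  have cardS: "card S = length B" using sh1 sh2 lens by (cases c) auto
  have cardC: "card C = length A" using sh1 sh2 lens by (cases c) auto
  define L where "L = lu_arr S (seq_des B)"
  define R where "R = ru_arr C (seq_des A)"
  have finS: "finite S" using Ssub finite_subset by blast
  have finC: "finite C" by (simp add: C_def)
  have dB: "seq_des B \<subseteq> {1..<card S}" using seq_des_sub[of B] cardS by simp
  have dA: "seq_des A \<subseteq> {1..<card C}" using seq_des_sub[of A] cardC by simp
  have Lp: "set L = S" "distinct L" "left_unimodal L" "seq_des L = seq_des B"
    using lu_arr_props[OF finS dB] unfolding L_def by blast+
  have Rp: "set R = C" "distinct R" "right_unimodal R" "seq_des R = seq_des A"
    using ru_arr_props[OF finC dA] unfolding R_def by blast+
  have lL: "length L = length B" using distinct_card[OF Lp(2)] Lp(1) cardS by simp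
  have lR: "length R = length A" using distinct_card[OF Rp(2)] Rp(1) cardC by simp
  have ph: "phi n p = fw n (L @ n # R)"
    using phi_fw[OF dw sw w_def] AB(4) by (simp add: L_def R_def S_def C_def w_def)
  define w' where "w' = L @ n # R"
  have dw': "distinct w'"
  proof -
    have "set L \<inter> set R = {}" using Lp(1) Rp(1) by (auto simp: C_def)
    moreover have nn1: "n \<notin> {1..n-1}" using n by simp
    moreover have "n \<notin> set L" using Lp(1) Ssub nn1 by blast
    moreover have "n \<notin> set R" using Rp(1) nn1 by (auto simp: C_def)
    ultimately show ?thesis using Lp(2) Rp(2) by (auto simp: w'_def)
  qed
  have sw': "set w' = {1..n}"
  proof -
    have "set w' = insert n (S \<union> C)" using Lp(1) Rp(1) by (auto simp: w'_def)
    also have "S \<union> C = {1..n-1}" using Ssub by (auto simp: C_def)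
    finally show ?thesis using \<open>insert n {1..n-1} = {1..n}\<close> by simp
  qed
  have lw': "length w' = n" using len_perm_word[OF dw' sw'] .
  have inv1: "inv (phi n p) n = inv p n"
    using fw_inv[OF dw' sw' w'_def] fw_inv[OF dw sw w_def] ph AB(4) lL by (simp add: w_def w'_def)
  have flag: "(L \<noteq> [] \<and> (R = [] \<or> last R > hd L)) = c"
  proof (cases "B = [] \<or> A = []")
    case True
    then show ?thesis using lL lR by (auto simp: c_def)
  next
    case False
    then have ne: "L \<noteq> []" "R \<noteq> []" using lL lR by auto
    have hL: "hd L \<in> S" "last R \<in> C" using ne Lp(1) Rp(1) by auto
    show ?thesis
    proof (cases c)
      case True
      then have "hd L \<le> length B" "last R \<ge> length B + 1" using sh1 hL by auto
      then show ?thesis using True ne by simp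
    next
      case cF: False
      then have "hd L \<ge> n - length B" "last R \<le> n - length B - 1" using sh2 hL by auto
      then have "\<not> last R > hd L" by simp
      then show ?thesis using cF ne by simp
    qed
  qed
  have RA: "(R \<noteq> []) = (A \<noteq> [])" using lR by auto
  have cd1: "cDes n (phi n p) = cDes n p"
  proof -
    have "cDes n (phi n p) = cDes n (fw n w')" using ph by (simp add: w'_def)
    also have "\<dots> = seq_des L \<union> (if R \<noteq> [] then {length L + 1} else {}) \<union>
        (\<lambda>i. i + (length L + 1)) ` seq_des R \<union> (if c then {n} else {})"
      unfolding cDes_mid[OF dw' sw' w'_def] flag ..
    also have "\<dots> = seq_des B \<union> (if A \<noteq> [] then {length B + 1} else {}) \<union>
        (\<lambda>i. i + (length B + 1)) ` seq_des A \<union> (if c then {n} else {})"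
      unfolding Lp(4) Rp(4) lL RA ..
    also have "\<dots> = cDes n (fw n w)" unfolding cDes_mid[OF dw sw w_def] c_def ..
    also have "\<dots> = cDes n p" using AB(4) by (simp add: w_def)
    finally show ?thesis .
  qed
  have asetp: "phi n p \<in> Aset n"
  proof -
    have "\<forall>j\<in>{1..n}. cyc_interval n (fw n w' ` {1..j})"
    proof
      fix j assume j: "j \<in> {1..n}"
      have im: "fw n w' ` {1..j} = set (take j w')" using fw_image[OF lw'] j by simp
      show "cyc_interval n (fw n w' ` {1..j})"
      proof (cases "j \<le> length L")
        case True
        then have tj: "take j w' = take j L" by (simp add: w'_def)
        obtain a b where ab: "S = {a..b}" using Sint by blast
        obtain a' b' where ab': "set (take j L) = {a'..b'}"
          using lu_prefix_interval[OF Lp(3), of a b j] Lp(1) ab by blast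
        have "{1..n-1} \<subseteq> {1..n}" by auto
        then have "set (take j L) \<subseteq> {1..n}" using set_take_subset[of j L] Lp(1) Ssub by blast
        then show ?thesis unfolding im tj ab' using cyc_ord by simp
      next
        case False
        define m where "m = j - length L - 1"
        have jm: "j - length L = Suc m" using False by (simp add: m_def)
        have dj: "drop j w' = drop m R" using jm by (simp add: w'_def)
        have jn: "j \<le> n" using j by simp
        have lw2: "length L + length R + 1 = n" using lw' by (simp add: w'_def)
        have m: "m \<le> length R" unfolding m_def using jn lw2 by linarith
        have tr: "take (length R - m) (rev R) = rev (drop m R)" using m by (simp add: take_rev)
        obtain a b where ab: "C = {a..b}" using Cint by blast
        have luR: "left_unimodal (rev R)" using Rp(3) by (simp add: right_unimodal_def)
        obtain a' b' where ab': "set (take (length R - m) (rev R)) = {a'..b'}"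
        proof -
          have sr: "set (rev R) = {a..b}" using Rp(1) ab by simp
          show ?thesis using lu_prefix_interval[OF luR sr, of "length R - m"] that by blast
        qed
        have "set (drop j w') = {a'..b'}" using ab' tr dj by simp
        then have "set (take j w') = {1..n} - {a'..b'}" using set_take_compl[OF dw' sw', of j] by simp
        then show ?thesis unfolding im using cyc_compl[OF n] by simp
      qed
    qed
    moreover have "fw n w' permutes {1..n}" using fw_permutes[OF dw' sw'] .
    ultimately show ?thesis using ph by (simp add: Aset_def w'_def)
  qed
  show ?thesis using cd1 inv1 asetp by simp
qed


lemma flag_cDes:
  assumes d: "distinct w" and s: "set w = {1..n}" and w: "w = X @ n # Y"
  shows "(n \<in> cDes n (fw n w)) = (X \<noteq> [] \<and> (Y = [] \<or> last Y > hd X))"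
proof -
  note b = below_n[OF d s w]
  have len: "length w = n" using len_perm_word[OF d s] .
  have "(n \<in> cDes n (fw n w)) = (last w > hd w)"
    using cDes_fw[OF len b(3)] n_notin_seq_des[OF d s] by auto
  also have "\<dots> = (X \<noteq> [] \<and> (Y = [] \<or> last Y > hd X))"
    using flag_mid[OF b(1,2)] w by simp
  finally show ?thesis .
qed

lemma LC_unique:
  assumes n: "n \<ge> 1" and p: "p \<in> LC n" and p': "p' \<in> LC n"
    and i: "inv p n = inv p' n" and c: "cDes n p = cDes n p'"
  shows "p = p'"
proof -
  obtain A B where AB: "distinct (A @ B)" "set (A @ B) = {1..n-1}" "left_unimodal (A @ B)" "p = fw n (B @ n # A)"
    using p LC_iff[OF n] by blast
  obtain A' B' where AB': "distinct (A' @ B')" "set (A' @ B') = {1..n-1}" "left_unimodal (A' @ B')" "p' = fw n (B' @ n # A')"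
    using p' LC_iff[OF n] by blast
  have ins: "insert n {1..n-1} = {1..n}" using n by auto
  define w where "w = B @ n # A"
  define w' where "w' = B' @ n # A'"
  have nn: "n \<notin> set (A @ B)" "n \<notin> set (A' @ B')" using AB(2) AB'(2) by auto
  have dw: "distinct w" using AB(1) nn by (auto simp: w_def)
  have sw: "set w = {1..n}" using AB(2) ins by (auto simp: w_def)
  have dw': "distinct w'" using AB'(1) nn by (auto simp: w'_def)
  have sw': "set w' = {1..n}" using AB'(2) ins by (auto simp: w'_def)
  have lB: "length B = length B'"
    using fw_inv[OF dw sw w_def] fw_inv[OF dw' sw' w'_def] i AB(4) AB'(4) by (simp add: w_def w'_def)
  have lA: "length A = length A'"
    using len_perm_word[OF dw sw] len_perm_word[OF dw' sw'] lB by (simp add: w_def w'_def)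
  have sd: "seq_des w = seq_des w'"
  proof -
    have "Des n p = Des n p'" using c by (simp add: Des_cDes)
    then show ?thesis using Des_fw[OF len_perm_word[OF dw sw]] Des_fw[OF len_perm_word[OF dw' sw']] AB(4) AB'(4)
      by (simp add: w_def w'_def)
  qed
  note b = below_n[OF dw sw w_def]
  note b' = below_n[OF dw' sw' w'_def]
  have sB: "seq_des B = seq_des B'"
    using proj1[OF b(1,2)] proj1[OF b'(1,2)] sd lB by (simp add: w_def w'_def)
  have sA: "seq_des A = seq_des A'"
    using proj2[OF b(1,2)] proj2[OF b'(1,2)] sd lB by (simp add: w_def w'_def)
  have fl: "(B \<noteq> [] \<and> (A = [] \<or> last A > hd B)) = (B' \<noteq> [] \<and> (A' = [] \<or> last A' > hd B'))"
    using flag_cDes[OF dw sw w_def] flag_cDes[OF dw' sw' w'_def] c AB(4) AB'(4) by (simp add: w_def w'_def)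
  have eA: "(A = []) = (A' = [])" using lA by auto
  have eB: "(B = []) = (B' = [])" using lB by auto
  have cnd: "(A \<noteq> [] \<and> B \<noteq> [] \<and> last A > hd B) = (A' \<noteq> [] \<and> B' \<noteq> [] \<and> last A' > hd B')"
    using fl eA eB by blast
  have "seq_des (A @ B) = seq_des (A' @ B')"
    unfolding seq_des_append sA sB lA cnd ..
  moreover have "set (A @ B) = set (A' @ B')" using AB(2) AB'(2) by simp
  ultimately have "A @ B = A' @ B'" using lu_unique AB(3) AB'(3) by blast
  then have "A = A'" "B = B'" using lA by auto
  then show ?thesis using AB(4) AB'(4) by simp
qed

lemma Aset_pre:
  assumes n: "n \<ge> 1" and q: "q \<in> Aset n"
  shows "\<exists>p\<in>LC n. inv p n = inv q n \<and> cDes n p = cDes n q"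
proof -
  obtain X Y where XY: "q = fw n (X @ n # Y)" "distinct (X @ n # Y)" "set (X @ n # Y) = {1..n}"
    "left_unimodal X" "right_unimodal Y" "set X = S1of n X Y"
    using Aset_struct[OF n q] by blast
  have lXY: "length X + length Y + 1 = n" using len_perm_word[OF XY(2,3)] by simp
  define F' where "F' = (if Y \<noteq> [] \<and> X \<noteq> [] \<and> last Y > hd X then {length Y} else {})"
  define D where "D = seq_des Y \<union> (\<lambda>i. i + length Y) ` seq_des X \<union> F'"
  have cn: "card {1..n-1} = length X + length Y" using lXY by simp
  have Dsub: "D \<subseteq> {1..<card {1..n-1}}"
  proof -
    have "seq_des Y \<subseteq> {1..<length X + length Y}" using seq_des_sub[of Y] by auto
    moreover have "(\<lambda>i. i + length Y) ` seq_des X \<subseteq> {1..<length X + length Y}" using seq_des_sub[of X] by auto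
    moreover have "F' \<subseteq> {1..<length X + length Y}"
    proof (cases "Y \<noteq> [] \<and> X \<noteq> [] \<and> last Y > hd X")
      case True
      then have "length Y \<ge> 1" "length X \<ge> 1" by (auto simp: Suc_le_eq)
      moreover have "F' = {length Y}" unfolding F'_def by (rule if_P[OF True])
      ultimately show ?thesis by (simp add: less_eq_Suc_le)
    next
      case False
      have "F' = {}" unfolding F'_def by (rule if_not_P[OF False])
      then show ?thesis by simp
    qed
    ultimately show ?thesis unfolding D_def cn by blast
  qed
  obtain u where u: "set u = {1..n-1}" "distinct u" "left_unimodal u" "seq_des u = D"
    using lu_exists[OF _ Dsub] by blast
  have lu: "length u = length X + length Y" using distinct_card[OF u(2)] u(1) cn by simp
  define A where "A = take (length Y) u"
  define B where "B = drop (length Y) u"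
  have uAB: "u = A @ B" by (simp add: A_def B_def)
  have lA: "length A = length Y" using lu by (simp add: A_def)
  have lB: "length B = length X" using lu by (simp add: B_def)
  define F where "F = (if A \<noteq> [] \<and> B \<noteq> [] \<and> last A > hd B then {length Y} else {})"
  have eq: "seq_des A \<union> (\<lambda>i. i + length Y) ` seq_des B \<union> F = seq_des Y \<union> (\<lambda>i. i + length Y) ` seq_des X \<union> F'"
  proof -
    have "seq_des A \<union> (\<lambda>i. i + length Y) ` seq_des B \<union> F = seq_des (A @ B)"
      unfolding seq_des_append F_def lA ..
    also have "\<dots> = D" using u(4) uAB by simp
    finally show ?thesis unfolding D_def .
  qed
  have s1: "seq_des A \<subseteq> {1..<length Y}" "seq_des Y \<subseteq> {1..<length Y}"
    using seq_des_sub[of A] seq_des_sub[of Y] lA by auto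
  have s2: "seq_des B \<subseteq> {1..}" "seq_des X \<subseteq> {1..}" using seq_des_sub[of B] seq_des_sub[of X] by auto
  have s3: "F \<subseteq> {length Y}" "F' \<subseteq> {length Y}" by (auto simp: F_def F'_def)
  note sp = split_des[OF s1 s2 s3 eq]
  have cnd: "(A \<noteq> [] \<and> B \<noteq> [] \<and> last A > hd B) = (Y \<noteq> [] \<and> X \<noteq> [] \<and> last Y > hd X)"
    using sp(3) unfolding F_def F'_def by (auto split: if_splits)
  have eA: "(A = []) = (Y = [])" using lA by auto
  have eB: "(B = []) = (X = [])" using lB by auto
  have fl: "(B \<noteq> [] \<and> (A = [] \<or> last A > hd B)) = (X \<noteq> [] \<and> (Y = [] \<or> last Y > hd X))"
    using cnd eA eB by blast
  define p where "p = fw n (B @ n # A)"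
  have pLC: "p \<in> LC n" using LC_iff[OF n] u uAB p_def by blast
  have ins: "insert n {1..n-1} = {1..n}" using n by auto
  have nn: "n \<notin> set u" using u(1) by auto
  have dw: "distinct (B @ n # A)" using u(2) nn uAB by auto
  have sw: "set (B @ n # A) = {1..n}" using u(1) uAB ins by auto
  have "inv p n = inv q n"
    using fw_inv[OF dw sw refl] fw_inv[OF XY(2,3) refl] lB XY(1) p_def by simp
  moreover have "cDes n p = cDes n q"
    unfolding p_def XY(1) cDes_mid[OF dw sw refl] cDes_mid[OF XY(2,3) refl] fl
    unfolding lB sp(1) sp(2) eA ..
  ultimately show ?thesis using pLC by blast
qed

theorem lemma6p9:
  fixes n :: nat
  assumes "n \<ge> 1"
  shows "bij_betw (phi n) (LC n) (Aset n)
    \<and> (\<forall>p\<in>LC n. cDes n (phi n p) = cDes n p \<and> inv (phi n p) n = inv p n)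
    \<and> (\<forall>(x :: nat \<Rightarrow> 'a :: comm_ring_1) t.
         (\<Sum>p\<in>Aset n. (\<Prod>i\<in>cDes n p. x i) * t ^ (inv p n))
       = (\<Sum>p\<in>LC n. (\<Prod>i\<in>cDes n p. x i) * t ^ (inv p n)))"
proof -
  have c: "\<forall>p\<in>LC n. cDes n (phi n p) = cDes n p \<and> inv (phi n p) n = inv p n"
    using LC_phi[OF assms] by blast
  have inj: "inj_on (phi n) (LC n)"
  proof (rule inj_onI)
    fix p p' assume pp: "p \<in> LC n" "p' \<in> LC n" "phi n p = phi n p'"
    have "inv p n = inv p' n" using c pp by metis
    moreover have "cDes n p = cDes n p'" using c pp by metis
    ultimately show "p = p'" using LC_unique[OF assms pp(1,2)] by blast
  qed
  have img: "phi n ` LC n = Aset n"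
  proof
    show "phi n ` LC n \<subseteq> Aset n" using LC_phi[OF assms] by blast
  next
    show "Aset n \<subseteq> phi n ` LC n"
    proof
      fix q assume q: "q \<in> Aset n"
      obtain p where p: "p \<in> LC n" "inv p n = inv q n" "cDes n p = cDes n q"
        using Aset_pre[OF assms q] by blast
      have "phi n p = phi n q" using phi_dep[OF p(2,3)] .
      also have "\<dots> = q" using phi_Aset[OF assms q] .
      finally show "q \<in> phi n ` LC n" using p(1) by blast
    qed
  qed
  have bij: "bij_betw (phi n) (LC n) (Aset n)" using inj img by (simp add: bij_betw_def)
  have sum: "(\<Sum>p\<in>Aset n. (\<Prod>i\<in>cDes n p. x i) * t ^ (inv p n))
       = (\<Sum>p\<in>LC n. (\<Prod>i\<in>cDes n p. x i) * t ^ (inv p n))" for x :: "nat \<Rightarrow> 'a :: comm_ring_1" and t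
  proof -
    have "(\<Sum>p\<in>Aset n. (\<Prod>i\<in>cDes n p. x i) * t ^ (inv p n))
        = (\<Sum>p\<in>phi n ` LC n. (\<Prod>i\<in>cDes n p. x i) * t ^ (inv p n))" using img by simp
    also have "\<dots> = (\<Sum>p\<in>LC n. (\<Prod>i\<in>cDes n (phi n p). x i) * t ^ (inv (phi n p) n))"
      using sum.reindex[OF inj] by simp
    also have "\<dots> = (\<Sum>p\<in>LC n. (\<Prod>i\<in>cDes n p. x i) * t ^ (inv p n))"
      using c by (intro sum.cong) auto
    finally show ?thesis .
  qed
  show ?thesis using bij c sum by blast
qed

end
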